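(* Let $R$ be a countable ring, let $A$ be any index set, and let $(M_\alpha)_{\alpha\in A}$ be a family of left $R$-modules. Suppose $B\subseteq A$ is at most countable, that $M_\alpha$ is not algebraically compact for every $\alpha\in B$, and that $M_\alpha$ is algebraically compact for every $\alpha\in A\setminus B$. Then $$\prod_{\alpha\in A}M_\alpha\Big/\bigoplus_{\alpha\in A}M_\alpha$$ is an algebraically compact left $R$-module.
   Context: A left $R$-module $M$ is algebraically compact if every system of linear equations $\sum_{j\in J} r_{ij}x_j=m_i$ ($i\in I$, $r_{ij}\in R$, each row having almost all $r_{ij}=0$, $m_i\in M$, $I,J$ arbitrary sets) whose finite subsystems are all solvable in $M$ is itself solvable in $M$ (equivalently, $M$ is pure injective). *)

theory Defs
  imports "HOL-Algebra.Module" "HOL-Library.Countable_Set"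
begin

text \<open>Same axioms as the library locale module, but over ring instead of cring.\<close>

locale left_module = R?: ring + M?: abelian_group M for M (structure) +
  assumes lsmult_closed:
      "\<lbrakk>a \<in> carrier R; x \<in> carrier M\<rbrakk> \<Longrightarrow> a \<odot>\<^bsub>M\<^esub> x \<in> carrier M"
    and lsmult_l_distr:
      "\<lbrakk>a \<in> carrier R; b \<in> carrier R; x \<in> carrier M\<rbrakk> \<Longrightarrow>
      (a \<oplus> b) \<odot>\<^bsub>M\<^esub> x = a \<odot>\<^bsub>M\<^esub> x \<oplus>\<^bsub>M\<^esub> b \<odot>\<^bsub>M\<^esub> x"
    and lsmult_r_distr:
      "\<lbrakk>a \<in> carrier R; x \<in> carrier M; y \<in> carrier M\<rbrakk> \<Longrightarrow>
      a \<odot>\<^bsub>M\<^esub> (x \<oplus>\<^bsub>M\<^esub> y) = a \<odot>\<^bsub>M\<^esub> x \<oplus>\<^bsub>M\<^esub> a \<odot>\<^bsub>M\<^esub> y"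
    and lsmult_assoc1:
      "\<lbrakk>a \<in> carrier R; b \<in> carrier R; x \<in> carrier M\<rbrakk> \<Longrightarrow>
      (a \<otimes> b) \<odot>\<^bsub>M\<^esub> x = a \<odot>\<^bsub>M\<^esub> (b \<odot>\<^bsub>M\<^esub> x)"
    and lsmult_one:
      "x \<in> carrier M \<Longrightarrow> \<one> \<odot>\<^bsub>M\<^esub> x = x"

text \<open>A system indexed by equations I and unknowns J: row i reads
  sum over j in J of c i j * x_j = m i, with almost all c i j zero.\<close>

definition lin_system ::
  "'r ring \<Rightarrow> ('r, 'b) module \<Rightarrow> 'i set \<Rightarrow> 'j set \<Rightarrow> ('i \<Rightarrow> 'j \<Rightarrow> 'r) \<Rightarrow> ('i \<Rightarrow> 'b) \<Rightarrow> bool" where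
  "lin_system R M I J c m \<longleftrightarrow>
     (\<forall>i\<in>I. (\<forall>j\<in>J. c i j \<in> carrier R) \<and> finite {j \<in> J. c i j \<noteq> \<zero>\<^bsub>R\<^esub>} \<and> m i \<in> carrier M)"

definition solves ::
  "'r ring \<Rightarrow> ('r, 'b) module \<Rightarrow> 'j set \<Rightarrow> ('i \<Rightarrow> 'j \<Rightarrow> 'r) \<Rightarrow> ('i \<Rightarrow> 'b) \<Rightarrow> 'i set \<Rightarrow> ('j \<Rightarrow> 'b) \<Rightarrow> bool" where
  "solves R M J c m I0 x \<longleftrightarrow>
     (\<forall>j\<in>J. x j \<in> carrier M) \<and>
     (\<forall>i\<in>I0. finsum M (\<lambda>j. c i j \<odot>\<^bsub>M\<^esub> x j) {j \<in> J. c i j \<noteq> \<zero>\<^bsub>R\<^esub>} = m i)"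

text \<open>Algebraic compactness with respect to systems whose equation index sets
  live in type 'i and unknown index sets live in type 'j.  (HOL cannot quantify
  over types inside a formula.)\<close>
definition alg_compact_idx ::
  "'i itself \<Rightarrow> 'j itself \<Rightarrow> 'r ring \<Rightarrow> ('r, 'b) module \<Rightarrow> bool" where
  "alg_compact_idx (_ :: 'i itself) (_ :: 'j itself) R M \<longleftrightarrow>
     (\<forall>(I :: 'i set) (J :: 'j set) c m.
        lin_system R M I J c m \<longrightarrow>
        (\<forall>I0 \<subseteq> I. finite I0 \<longrightarrow> (\<exists>x. solves R M J c m I0 x)) \<longrightarrow>
        (\<exists>x. solves R M J c m I x))"

definition prod_module :: "'a set \<Rightarrow> ('a \<Rightarrow> ('r, 'b) module) \<Rightarrow> ('r, 'a \<Rightarrow> 'b) module" where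
  "prod_module A M =
     \<lparr> carrier = {f. (\<forall>\<alpha>\<in>A. f \<alpha> \<in> carrier (M \<alpha>)) \<and> (\<forall>\<alpha>. \<alpha> \<notin> A \<longrightarrow> f \<alpha> = undefined)},
       monoid.mult = undefined, one = undefined,
       zero = (\<lambda>\<alpha>\<in>A. \<zero>\<^bsub>M \<alpha>\<^esub>),
       add = (\<lambda>f g. \<lambda>\<alpha>\<in>A. f \<alpha> \<oplus>\<^bsub>M \<alpha>\<^esub> g \<alpha>),
       smult = (\<lambda>r f. \<lambda>\<alpha>\<in>A. r \<odot>\<^bsub>M \<alpha>\<^esub> f \<alpha>) \<rparr>"

definition dsum_carrier :: "'a set \<Rightarrow> ('a \<Rightarrow> ('r, 'b) module) \<Rightarrow> ('a \<Rightarrow> 'b) set" where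
  "dsum_carrier A M =
     {f \<in> carrier (prod_module A M). finite {\<alpha> \<in> A. f \<alpha> \<noteq> \<zero>\<^bsub>M \<alpha>\<^esub>}}"

definition msum :: "('r, 'b) module \<Rightarrow> 'b set \<Rightarrow> 'b set \<Rightarrow> 'b set" where
  "msum M X Y = {x \<oplus>\<^bsub>M\<^esub> y | x y. x \<in> X \<and> y \<in> Y}"

definition quot_module :: "('r, 'b) module \<Rightarrow> 'b set \<Rightarrow> ('r, 'b set) module" where
  "quot_module M N =
     \<lparr> carrier = {msum M {x} N | x. x \<in> carrier M},
       monoid.mult = undefined, one = undefined,
       zero = N,
       add = msum M,
       smult = (\<lambda>r X. msum M ((\<lambda>x. r \<odot>\<^bsub>M\<^esub> x) ` X) N) \<rparr>"

end

theory Submission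
  imports Defs
begin

context left_module begin

lemma lsm_zero_l: assumes "x \<in> carrier M" shows "\<zero>\<^bsub>R\<^esub> \<odot>\<^bsub>M\<^esub> x = \<zero>\<^bsub>M\<^esub>"
proof -
  let ?y = "\<zero>\<^bsub>R\<^esub> \<odot>\<^bsub>M\<^esub> x"
  have y: "?y \<in> carrier M" using assms lsmult_closed by simp
  have "?y \<oplus>\<^bsub>M\<^esub> ?y = ?y \<oplus>\<^bsub>M\<^esub> \<zero>\<^bsub>M\<^esub>"
    using lsmult_l_distr[of "\<zero>\<^bsub>R\<^esub>" "\<zero>\<^bsub>R\<^esub>" x] assms y by simp
  then show ?thesis using y by (simp add: M.add.Units_l_cancel)
qed

lemma lsm_zero_r: assumes "a \<in> carrier R" shows "a \<odot>\<^bsub>M\<^esub> \<zero>\<^bsub>M\<^esub> = \<zero>\<^bsub>M\<^esub>"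
proof -
  let ?y = "a \<odot>\<^bsub>M\<^esub> \<zero>\<^bsub>M\<^esub>"
  have y: "?y \<in> carrier M" using assms lsmult_closed by simp
  have "?y \<oplus>\<^bsub>M\<^esub> ?y = ?y \<oplus>\<^bsub>M\<^esub> \<zero>\<^bsub>M\<^esub>"
    using lsmult_r_distr[of a "\<zero>\<^bsub>M\<^esub>" "\<zero>\<^bsub>M\<^esub>"] assms y by simp
  then show ?thesis using y by (simp add: M.add.Units_l_cancel)
qed

lemma lsm_minus: assumes "a \<in> carrier R" "x \<in> carrier M"
  shows "a \<odot>\<^bsub>M\<^esub> (\<ominus>\<^bsub>M\<^esub> x) = \<ominus>\<^bsub>M\<^esub> (a \<odot>\<^bsub>M\<^esub> x)"
proof -
  have "a \<odot>\<^bsub>M\<^esub> (\<ominus>\<^bsub>M\<^esub> x) \<oplus>\<^bsub>M\<^esub> a \<odot>\<^bsub>M\<^esub> x = \<zero>\<^bsub>M\<^esub>"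
    using lsmult_r_distr[of a "\<ominus>\<^bsub>M\<^esub> x" x] assms lsm_zero_r by (simp add: M.l_neg)
  then show ?thesis using assms lsmult_closed by (simp add: M.minus_equality)
qed

lemma one_zero_triv: assumes "\<one>\<^bsub>R\<^esub> = \<zero>\<^bsub>R\<^esub>" "x \<in> carrier M" shows "x = \<zero>\<^bsub>M\<^esub>"
  using lsmult_one[OF assms(2)] lsm_zero_l[OF assms(2)] assms(1) by simp

end

locale fam =
  fixes R :: "'r ring" and A :: "'a set" and M :: "'a \<Rightarrow> ('r, 'b) module"
  assumes R_ring: "ring R"
    and LM: "\<And>\<alpha>. \<alpha> \<in> A \<Longrightarrow> left_module R (M \<alpha>)"
begin

abbreviation "P \<equiv> prod_module A M"

lemma LMs[simp]: "\<alpha> \<in> A \<Longrightarrow> left_module R (M \<alpha>)" by (rule LM)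
lemma MAg[simp]: "\<alpha> \<in> A \<Longrightarrow> abelian_group (M \<alpha>)" using LM left_module.axioms(2) by blast
lemma MAm[simp]: "\<alpha> \<in> A \<Longrightarrow> abelian_monoid (M \<alpha>)" using MAg abelian_group.axioms(1) by blast


lemma P_carrier: "f \<in> carrier P \<longleftrightarrow> (\<forall>\<alpha>\<in>A. f \<alpha> \<in> carrier (M \<alpha>)) \<and> (\<forall>\<alpha>. \<alpha> \<notin> A \<longrightarrow> f \<alpha> = undefined)"
  by (simp add: prod_module_def)

lemma P_add: "f \<oplus>\<^bsub>P\<^esub> g = (\<lambda>\<alpha>\<in>A. f \<alpha> \<oplus>\<^bsub>M \<alpha>\<^esub> g \<alpha>)"
  by (simp add: prod_module_def)
lemma P_zero: "\<zero>\<^bsub>P\<^esub> = (\<lambda>\<alpha>\<in>A. \<zero>\<^bsub>M \<alpha>\<^esub>)"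
  by (simp add: prod_module_def)
lemma P_smult: "r \<odot>\<^bsub>P\<^esub> f = (\<lambda>\<alpha>\<in>A. r \<odot>\<^bsub>M \<alpha>\<^esub> f \<alpha>)"
  by (simp add: prod_module_def)

lemma P_ext: "f \<in> carrier P \<Longrightarrow> g \<in> carrier P \<Longrightarrow> (\<And>\<alpha>. \<alpha> \<in> A \<Longrightarrow> f \<alpha> = g \<alpha>) \<Longrightarrow> f = g"
  unfolding P_carrier by (metis ext)

lemma P_restrict_carrier: "(\<lambda>\<alpha>\<in>A. h \<alpha>) \<in> carrier P \<longleftrightarrow> (\<forall>\<alpha>\<in>A. h \<alpha> \<in> carrier (M \<alpha>))"
  unfolding P_carrier by simp

lemma P_abgroup: "abelian_group P"
proof (rule abelian_groupI)
  fix x y assume "x \<in> carrier P" "y \<in> carrier P"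
  then show "x \<oplus>\<^bsub>P\<^esub> y \<in> carrier P"
    unfolding P_add P_restrict_carrier using LM by (auto simp: P_carrier intro: abelian_monoid.a_closed)
next
  show "\<zero>\<^bsub>P\<^esub> \<in> carrier P"
    unfolding P_zero P_restrict_carrier using LM by (auto intro: abelian_monoid.zero_closed)
next
  fix x y z assume "x \<in> carrier P" "y \<in> carrier P" "z \<in> carrier P"
  then show "(x \<oplus>\<^bsub>P\<^esub> y) \<oplus>\<^bsub>P\<^esub> z = x \<oplus>\<^bsub>P\<^esub> (y \<oplus>\<^bsub>P\<^esub> z)"
    unfolding P_add P_carrier using LM by (auto intro!: ext simp: abelian_monoid.a_assoc)
next
  fix x y assume "x \<in> carrier P" "y \<in> carrier P"
  then show "x \<oplus>\<^bsub>P\<^esub> y = y \<oplus>\<^bsub>P\<^esub> x"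
    unfolding P_add P_carrier using LM by (auto intro!: ext simp: abelian_monoid.a_comm)
next
  fix x assume "x \<in> carrier P"
  then show "\<zero>\<^bsub>P\<^esub> \<oplus>\<^bsub>P\<^esub> x = x"
    unfolding P_add P_zero P_carrier using LM by (auto intro!: ext simp: abelian_monoid.l_zero)
next
  fix x assume x: "x \<in> carrier P"
  show "\<exists>y\<in>carrier P. y \<oplus>\<^bsub>P\<^esub> x = \<zero>\<^bsub>P\<^esub>"
  proof (intro bexI)
    show "(\<lambda>\<alpha>\<in>A. \<ominus>\<^bsub>M \<alpha>\<^esub> x \<alpha>) \<in> carrier P"
      unfolding P_restrict_carrier using x LM by (auto simp: P_carrier intro: abelian_group.a_inv_closed)
    show "(\<lambda>\<alpha>\<in>A. \<ominus>\<^bsub>M \<alpha>\<^esub> x \<alpha>) \<oplus>\<^bsub>P\<^esub> x = \<zero>\<^bsub>P\<^esub>"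
      unfolding P_add P_zero using x LM by (auto intro!: ext simp: P_carrier abelian_group.l_neg)
  qed
qed

lemma P_lm: "left_module R P"
proof (intro left_module.intro left_module_axioms.intro)
  show "ring R" by (rule R_ring)
  show "abelian_group P" by (rule P_abgroup)
next
  fix a x assume "a \<in> carrier R" "x \<in> carrier P"
  then show "a \<odot>\<^bsub>P\<^esub> x \<in> carrier P"
    unfolding P_smult P_restrict_carrier using LM by (auto simp: P_carrier intro!: left_module.lsmult_closed[OF LM])
next
  fix a b x assume "a \<in> carrier R" "b \<in> carrier R" "x \<in> carrier P"
  then show "(a \<oplus>\<^bsub>R\<^esub> b) \<odot>\<^bsub>P\<^esub> x = a \<odot>\<^bsub>P\<^esub> x \<oplus>\<^bsub>P\<^esub> b \<odot>\<^bsub>P\<^esub> x"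
    unfolding P_smult P_add P_carrier using LM by (auto intro!: ext simp: left_module.lsmult_l_distr)
next
  fix a x y assume "a \<in> carrier R" "x \<in> carrier P" "y \<in> carrier P"
  then show "a \<odot>\<^bsub>P\<^esub> (x \<oplus>\<^bsub>P\<^esub> y) = a \<odot>\<^bsub>P\<^esub> x \<oplus>\<^bsub>P\<^esub> a \<odot>\<^bsub>P\<^esub> y"
    unfolding P_smult P_add P_carrier
    by (intro ext) (auto intro!: left_module.lsmult_r_distr[OF LM] left_module.lsmult_closed[OF LM] abelian_monoid.a_closed)
next
  fix a b x assume "a \<in> carrier R" "b \<in> carrier R" "x \<in> carrier P"
  then show "(a \<otimes>\<^bsub>R\<^esub> b) \<odot>\<^bsub>P\<^esub> x = a \<odot>\<^bsub>P\<^esub> (b \<odot>\<^bsub>P\<^esub> x)"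
    unfolding P_smult P_carrier using LM by (auto intro!: ext simp: left_module.lsmult_assoc1)
next
  fix x assume "x \<in> carrier P"
  then show "\<one>\<^bsub>R\<^esub> \<odot>\<^bsub>P\<^esub> x = x"
    unfolding P_smult P_carrier using LM by (auto intro!: ext simp: left_module.lsmult_one)
qed

lemma P_minus: assumes "x \<in> carrier P" shows "\<ominus>\<^bsub>P\<^esub> x = (\<lambda>\<alpha>\<in>A. \<ominus>\<^bsub>M \<alpha>\<^esub> x \<alpha>)"
proof -
  interpret PP: abelian_group P by (rule P_abgroup)
  have c: "(\<lambda>\<alpha>\<in>A. \<ominus>\<^bsub>M \<alpha>\<^esub> x \<alpha>) \<in> carrier P"
    unfolding P_restrict_carrier using assms LM by (auto simp: P_carrier intro: abelian_group.a_inv_closed)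
  have "(\<lambda>\<alpha>\<in>A. \<ominus>\<^bsub>M \<alpha>\<^esub> x \<alpha>) \<oplus>\<^bsub>P\<^esub> x = \<zero>\<^bsub>P\<^esub>"
      unfolding P_add P_zero using assms LM by (auto intro!: ext simp: P_carrier abelian_group.l_neg)
  then show ?thesis using PP.minus_equality[OF _ assms c] by simp
qed

lemma P_finsum: assumes "finite S" "f \<in> S \<rightarrow> carrier P" "\<alpha> \<in> A"
  shows "finsum P f S \<alpha> = finsum (M \<alpha>) (\<lambda>j. f j \<alpha>) S"
  using assms(1,2)
proof (induction S rule: finite_induct)
  case empty
  interpret PP: abelian_group P by (rule P_abgroup)
  interpret Ma: left_module R "M \<alpha>" using LM assms(3) .
  show ?case using assms(3) by (simp add: P_zero)
next
  case (insert a S)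
  interpret PP: abelian_group P by (rule P_abgroup)
  interpret Ma: left_module R "M \<alpha>" using LM assms(3) .
  have fa: "f a \<in> carrier P" and fS: "f \<in> S \<rightarrow> carrier P" using insert by auto
  have "finsum P f (insert a S) = f a \<oplus>\<^bsub>P\<^esub> finsum P f S"
    using insert fa fS by (simp add: PP.add.finprod_insert)
  moreover have "finsum (M \<alpha>) (\<lambda>j. f j \<alpha>) (insert a S) = f a \<alpha> \<oplus>\<^bsub>M \<alpha>\<^esub> finsum (M \<alpha>) (\<lambda>j. f j \<alpha>) S"
    using insert fa fS assms(3) by (intro Ma.add.finprod_insert) (auto simp: P_carrier Pi_def)
  ultimately show ?case using insert(3)[OF fS] assms(3) by (simp add: P_add)
qed

end

context fam begin

abbreviation "N \<equiv> dsum_carrier A M"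
abbreviation "Q \<equiv> quot_module P N"
abbreviation "cls u \<equiv> msum P {u} N"

lemma N_mem: "n \<in> N \<longleftrightarrow> n \<in> carrier P \<and> finite {\<alpha> \<in> A. n \<alpha> \<noteq> \<zero>\<^bsub>M \<alpha>\<^esub>}"
  by (simp add: dsum_carrier_def)

lemma Mneg0: "\<alpha> \<in> A \<Longrightarrow> \<ominus>\<^bsub>M \<alpha>\<^esub> \<zero>\<^bsub>M \<alpha>\<^esub> = \<zero>\<^bsub>M \<alpha>\<^esub>"
proof -
  assume a: "\<alpha> \<in> A"
  interpret Ma: abelian_group "M \<alpha>" using a by simp
  show ?thesis by simp
qed

lemma N_sub: "N \<subseteq> carrier P" using N_mem by auto

lemma zero_N: "\<zero>\<^bsub>P\<^esub> \<in> N"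
proof -
  interpret PP: abelian_group P by (rule P_abgroup)
  show ?thesis using PP.zero_closed by (simp add: N_mem P_zero)
qed

lemma N_add: assumes "n1 \<in> N" "n2 \<in> N" shows "n1 \<oplus>\<^bsub>P\<^esub> n2 \<in> N"
proof -
  interpret PP: abelian_group P by (rule P_abgroup)
  have c: "n1 \<in> carrier P" "n2 \<in> carrier P" using assms N_mem by auto
  have "{\<alpha> \<in> A. (n1 \<oplus>\<^bsub>P\<^esub> n2) \<alpha> \<noteq> \<zero>\<^bsub>M \<alpha>\<^esub>} \<subseteq> {\<alpha> \<in> A. n1 \<alpha> \<noteq> \<zero>\<^bsub>M \<alpha>\<^esub>} \<union> {\<alpha> \<in> A. n2 \<alpha> \<noteq> \<zero>\<^bsub>M \<alpha>\<^esub>}"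
    using c by (auto simp: P_add P_carrier abelian_monoid.l_zero)
  moreover have "finite ({\<alpha> \<in> A. n1 \<alpha> \<noteq> \<zero>\<^bsub>M \<alpha>\<^esub>} \<union> {\<alpha> \<in> A. n2 \<alpha> \<noteq> \<zero>\<^bsub>M \<alpha>\<^esub>})" using assms N_mem by simp
  ultimately have "finite {\<alpha> \<in> A. (n1 \<oplus>\<^bsub>P\<^esub> n2) \<alpha> \<noteq> \<zero>\<^bsub>M \<alpha>\<^esub>}" by (rule finite_subset)
  then show ?thesis using c N_mem PP.a_closed by simp
qed

lemma N_smult: assumes "r \<in> carrier R" "n \<in> N" shows "r \<odot>\<^bsub>P\<^esub> n \<in> N"
proof -
  interpret PL: left_module R P by (rule P_lm)
  have c: "n \<in> carrier P" using assms N_mem by auto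
  have "{\<alpha> \<in> A. (r \<odot>\<^bsub>P\<^esub> n) \<alpha> \<noteq> \<zero>\<^bsub>M \<alpha>\<^esub>} \<subseteq> {\<alpha> \<in> A. n \<alpha> \<noteq> \<zero>\<^bsub>M \<alpha>\<^esub>}"
    using c assms(1) by (auto simp: P_smult P_carrier left_module.lsm_zero_r[OF LM])
  moreover have "finite {\<alpha> \<in> A. n \<alpha> \<noteq> \<zero>\<^bsub>M \<alpha>\<^esub>}" using assms N_mem by simp
  ultimately have "finite {\<alpha> \<in> A. (r \<odot>\<^bsub>P\<^esub> n) \<alpha> \<noteq> \<zero>\<^bsub>M \<alpha>\<^esub>}" by (rule finite_subset)
  then show ?thesis using c assms(1) N_mem PL.lsmult_closed by simp
qed

lemma N_minus: assumes "n \<in> N" shows "\<ominus>\<^bsub>P\<^esub> n \<in> N"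
proof -
  interpret PP: abelian_group P by (rule P_abgroup)
  have c: "n \<in> carrier P" using assms N_mem by auto
  have "{\<alpha> \<in> A. (\<ominus>\<^bsub>P\<^esub> n) \<alpha> \<noteq> \<zero>\<^bsub>M \<alpha>\<^esub>} \<subseteq> {\<alpha> \<in> A. n \<alpha> \<noteq> \<zero>\<^bsub>M \<alpha>\<^esub>}"
    using c by (auto simp: P_minus P_carrier Mneg0)
  moreover have "finite {\<alpha> \<in> A. n \<alpha> \<noteq> \<zero>\<^bsub>M \<alpha>\<^esub>}" using assms N_mem by simp
  ultimately have "finite {\<alpha> \<in> A. (\<ominus>\<^bsub>P\<^esub> n) \<alpha> \<noteq> \<zero>\<^bsub>M \<alpha>\<^esub>}" by (rule finite_subset)
  then show ?thesis using c N_mem PP.a_inv_closed by simp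
qed

lemma cls_def: "cls u = {u \<oplus>\<^bsub>P\<^esub> n | n. n \<in> N}"
  by (auto simp: msum_def)

lemma cls_self: "u \<in> carrier P \<Longrightarrow> u \<in> cls u"
proof -
  interpret PP: abelian_group P by (rule P_abgroup)
  assume "u \<in> carrier P" then show ?thesis unfolding cls_def using zero_N by force
qed

lemma cls_sub: assumes u: "u \<in> carrier P" and v: "v \<in> carrier P"
    and fin: "finite {\<alpha> \<in> A. u \<alpha> \<noteq> v \<alpha>}"
  shows "cls u \<subseteq> cls v"
proof
  interpret PP: abelian_group P by (rule P_abgroup)
  let ?d = "\<ominus>\<^bsub>P\<^esub> v \<oplus>\<^bsub>P\<^esub> u"
  have dc: "?d \<in> carrier P" using u v by simp
  have "{\<alpha> \<in> A. ?d \<alpha> \<noteq> \<zero>\<^bsub>M \<alpha>\<^esub>} \<subseteq> {\<alpha> \<in> A. u \<alpha> \<noteq> v \<alpha>}"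
    using u v by (auto simp: P_add P_minus P_carrier abelian_group.l_neg)
  then have dN: "?d \<in> N" using N_mem dc fin finite_subset by blast
  fix w assume "w \<in> cls u"
  then obtain n where n: "n \<in> N" "w = u \<oplus>\<^bsub>P\<^esub> n" unfolding cls_def by blast
  have nc: "n \<in> carrier P" using n N_mem by auto
  have "w = v \<oplus>\<^bsub>P\<^esub> (?d \<oplus>\<^bsub>P\<^esub> n)"
    using n(2) u v nc by (simp add: PP.a_assoc[symmetric] PP.r_neg)
  moreover have "?d \<oplus>\<^bsub>P\<^esub> n \<in> N" using N_add dN n by blast
  ultimately show "w \<in> cls v" unfolding cls_def by blast
qed

lemma cls_eq: assumes u: "u \<in> carrier P" and v: "v \<in> carrier P"
  shows "cls u = cls v \<longleftrightarrow> finite {\<alpha> \<in> A. u \<alpha> \<noteq> v \<alpha>}"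
proof
  interpret PP: abelian_group P by (rule P_abgroup)
  assume "cls u = cls v"
  then have "u \<in> cls v" using cls_self u by auto
  then obtain n where n: "n \<in> N" "u = v \<oplus>\<^bsub>P\<^esub> n" unfolding cls_def by blast
  have nc: "n \<in> carrier P" using n N_mem by auto
  have "{\<alpha> \<in> A. u \<alpha> \<noteq> v \<alpha>} \<subseteq> {\<alpha> \<in> A. n \<alpha> \<noteq> \<zero>\<^bsub>M \<alpha>\<^esub>}"
    using n(2) v nc by (auto simp: P_add P_carrier abelian_monoid.r_zero)
  then show "finite {\<alpha> \<in> A. u \<alpha> \<noteq> v \<alpha>}" using n N_mem finite_subset by blast
next
  assume fin: "finite {\<alpha> \<in> A. u \<alpha> \<noteq> v \<alpha>}"
  moreover have "{\<alpha> \<in> A. v \<alpha> \<noteq> u \<alpha>} = {\<alpha> \<in> A. u \<alpha> \<noteq> v \<alpha>}" by auto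
  ultimately have "finite {\<alpha> \<in> A. v \<alpha> \<noteq> u \<alpha>}" by simp
  then show "cls u = cls v" using cls_sub[OF u v fin] cls_sub[OF v u] by blast
qed

lemma Q_carrier: "carrier Q = cls ` carrier P"
  by (auto simp: quot_module_def)
lemma Q_add: "X \<oplus>\<^bsub>Q\<^esub> Y = msum P X Y"
  by (simp add: quot_module_def)
lemma Q_smult: "r \<odot>\<^bsub>Q\<^esub> X = msum P ((\<lambda>x. r \<odot>\<^bsub>P\<^esub> x) ` X) N"
  by (simp add: quot_module_def)
lemma Q_zero0: "\<zero>\<^bsub>Q\<^esub> = N"
  by (simp add: quot_module_def)

lemma Q_zero: "\<zero>\<^bsub>Q\<^esub> = cls \<zero>\<^bsub>P\<^esub>"
proof -
  interpret PP: abelian_group P by (rule P_abgroup)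
  show ?thesis unfolding Q_zero0 cls_def using N_sub by force
qed

lemma cls_add: assumes u: "u \<in> carrier P" and v: "v \<in> carrier P"
  shows "cls u \<oplus>\<^bsub>Q\<^esub> cls v = cls (u \<oplus>\<^bsub>P\<^esub> v)"
proof -
  interpret PP: abelian_group P by (rule P_abgroup)
  show ?thesis unfolding Q_add
  proof (intro equalityI subsetI)
    fix w assume "w \<in> msum P (cls u) (cls v)"
    then obtain n1 n2 where n: "n1 \<in> N" "n2 \<in> N" "w = (u \<oplus>\<^bsub>P\<^esub> n1) \<oplus>\<^bsub>P\<^esub> (v \<oplus>\<^bsub>P\<^esub> n2)"
      unfolding msum_def cls_def by blast
    have c: "n1 \<in> carrier P" "n2 \<in> carrier P" using n N_sub by auto
    have "w = u \<oplus>\<^bsub>P\<^esub> (n1 \<oplus>\<^bsub>P\<^esub> (v \<oplus>\<^bsub>P\<^esub> n2))" using n(3) c u v by (simp add: PP.a_assoc)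
    also have "n1 \<oplus>\<^bsub>P\<^esub> (v \<oplus>\<^bsub>P\<^esub> n2) = v \<oplus>\<^bsub>P\<^esub> (n1 \<oplus>\<^bsub>P\<^esub> n2)" by (rule PP.a_lcomm[OF c(1) v c(2)])
    finally have "w = (u \<oplus>\<^bsub>P\<^esub> v) \<oplus>\<^bsub>P\<^esub> (n1 \<oplus>\<^bsub>P\<^esub> n2)" using c u v by (simp add: PP.a_assoc)
    then show "w \<in> cls (u \<oplus>\<^bsub>P\<^esub> v)" unfolding cls_def using N_add n by blast
  next
    fix w assume "w \<in> cls (u \<oplus>\<^bsub>P\<^esub> v)"
    then obtain n where n: "n \<in> N" "w = (u \<oplus>\<^bsub>P\<^esub> v) \<oplus>\<^bsub>P\<^esub> n" unfolding cls_def by blast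
    have c: "n \<in> carrier P" using n N_sub by auto
    have "w = (u \<oplus>\<^bsub>P\<^esub> \<zero>\<^bsub>P\<^esub>) \<oplus>\<^bsub>P\<^esub> (v \<oplus>\<^bsub>P\<^esub> n)" using n(2) c u v by (simp add: PP.a_assoc)
    moreover have "u \<oplus>\<^bsub>P\<^esub> \<zero>\<^bsub>P\<^esub> \<in> cls u" "v \<oplus>\<^bsub>P\<^esub> n \<in> cls v" unfolding cls_def using zero_N n by blast+
    ultimately show "w \<in> msum P (cls u) (cls v)" unfolding msum_def by blast
  qed
qed

lemma cls_smult: assumes r: "r \<in> carrier R" and u: "u \<in> carrier P"
  shows "r \<odot>\<^bsub>Q\<^esub> cls u = cls (r \<odot>\<^bsub>P\<^esub> u)"
proof -
  interpret PL: left_module R P by (rule P_lm)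
  show ?thesis unfolding Q_smult
  proof (intro equalityI subsetI)
    fix w assume "w \<in> msum P ((\<lambda>x. r \<odot>\<^bsub>P\<^esub> x) ` cls u) N"
    then obtain n1 n2 where n: "n1 \<in> N" "n2 \<in> N" "w = (r \<odot>\<^bsub>P\<^esub> (u \<oplus>\<^bsub>P\<^esub> n1)) \<oplus>\<^bsub>P\<^esub> n2"
      unfolding msum_def cls_def by blast
    have c: "n1 \<in> carrier P" "n2 \<in> carrier P" using n N_sub by auto
    have "w = (r \<odot>\<^bsub>P\<^esub> u) \<oplus>\<^bsub>P\<^esub> ((r \<odot>\<^bsub>P\<^esub> n1) \<oplus>\<^bsub>P\<^esub> n2)"
      using n(3) c u r by (simp add: PL.lsmult_r_distr PL.lsmult_closed PL.a_assoc)
    then show "w \<in> cls (r \<odot>\<^bsub>P\<^esub> u)" unfolding cls_def using N_add N_smult n r by blast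
  next
    fix w assume "w \<in> cls (r \<odot>\<^bsub>P\<^esub> u)"
    then obtain n where n: "n \<in> N" "w = (r \<odot>\<^bsub>P\<^esub> u) \<oplus>\<^bsub>P\<^esub> n" unfolding cls_def by blast
    have "r \<odot>\<^bsub>P\<^esub> u = r \<odot>\<^bsub>P\<^esub> (u \<oplus>\<^bsub>P\<^esub> \<zero>\<^bsub>P\<^esub>)" using u by simp
    moreover have "u \<oplus>\<^bsub>P\<^esub> \<zero>\<^bsub>P\<^esub> \<in> cls u" unfolding cls_def using zero_N by blast
    ultimately show "w \<in> msum P ((\<lambda>x. r \<odot>\<^bsub>P\<^esub> x) ` cls u) N" unfolding msum_def using n by blast
  qed
qed

lemma Q_cases: assumes "X \<in> carrier Q" obtains u where "u \<in> carrier P" "X = cls u"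
  using assms Q_carrier by auto

lemma cls_in: "u \<in> carrier P \<Longrightarrow> cls u \<in> carrier Q"
  using Q_carrier by auto

lemma Q_abgroup: "abelian_group Q"
proof -
  interpret PL: left_module R P by (rule P_lm)
  show ?thesis
  proof (rule abelian_groupI)
    fix x y assume "x \<in> carrier Q" "y \<in> carrier Q"
    then obtain u v where "u \<in> carrier P" "v \<in> carrier P" "x = cls u" "y = cls v" by (metis Q_cases)
    then show "x \<oplus>\<^bsub>Q\<^esub> y \<in> carrier Q" by (simp add: cls_add cls_in)
  next
    show "\<zero>\<^bsub>Q\<^esub> \<in> carrier Q" using Q_zero cls_in by simp
  next
    fix x y z assume "x \<in> carrier Q" "y \<in> carrier Q" "z \<in> carrier Q"
    then obtain u v w where "u \<in> carrier P" "v \<in> carrier P" "w \<in> carrier P" "x = cls u" "y = cls v" "z = cls w" by (metis Q_cases)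
    then show "x \<oplus>\<^bsub>Q\<^esub> y \<oplus>\<^bsub>Q\<^esub> z = x \<oplus>\<^bsub>Q\<^esub> (y \<oplus>\<^bsub>Q\<^esub> z)"
      by (simp add: cls_add PL.a_assoc)
  next
    fix x y assume "x \<in> carrier Q" "y \<in> carrier Q"
    then obtain u v where "u \<in> carrier P" "v \<in> carrier P" "x = cls u" "y = cls v" by (metis Q_cases)
    then show "x \<oplus>\<^bsub>Q\<^esub> y = y \<oplus>\<^bsub>Q\<^esub> x"
      by (simp add: cls_add PL.a_comm)
  next
    fix x assume "x \<in> carrier Q"
    then obtain u where "u \<in> carrier P" "x = cls u" by (metis Q_cases)
    then show "\<zero>\<^bsub>Q\<^esub> \<oplus>\<^bsub>Q\<^esub> x = x"
      by (simp add: cls_add Q_zero)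
  next
    fix x assume "x \<in> carrier Q"
    then obtain u where u: "u \<in> carrier P" "x = cls u" by (rule Q_cases)
    show "\<exists>y\<in>carrier Q. y \<oplus>\<^bsub>Q\<^esub> x = \<zero>\<^bsub>Q\<^esub>"
      using u by (intro bexI[of _ "cls (\<ominus>\<^bsub>P\<^esub> u)"]) (auto simp: cls_add Q_zero PL.l_neg intro: cls_in)
  qed
qed

lemma Q_lm: "left_module R Q"
proof -
  interpret PL: left_module R P by (rule P_lm)
  show ?thesis
  proof (intro left_module.intro left_module_axioms.intro)
    show "ring R" by (rule R_ring)
    show "abelian_group Q" by (rule Q_abgroup)
  next
    fix a x assume a: "a \<in> carrier R" and "x \<in> carrier Q"
    then obtain u where "u \<in> carrier P" "x = cls u" by (metis Q_cases)
    then show "a \<odot>\<^bsub>Q\<^esub> x \<in> carrier Q" using a by (simp add: cls_smult cls_in PL.lsmult_closed)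
  next
    fix a b x assume ab: "a \<in> carrier R" "b \<in> carrier R" and "x \<in> carrier Q"
    then obtain u where "u \<in> carrier P" "x = cls u" by (metis Q_cases)
    then show "(a \<oplus>\<^bsub>R\<^esub> b) \<odot>\<^bsub>Q\<^esub> x = a \<odot>\<^bsub>Q\<^esub> x \<oplus>\<^bsub>Q\<^esub> b \<odot>\<^bsub>Q\<^esub> x"
      using ab by (simp add: cls_smult cls_add PL.lsmult_closed PL.lsmult_l_distr)
  next
    fix a x y assume a: "a \<in> carrier R" and "x \<in> carrier Q" "y \<in> carrier Q"
    then obtain u v where "u \<in> carrier P" "v \<in> carrier P" "x = cls u" "y = cls v" by (metis Q_cases)
    then show "a \<odot>\<^bsub>Q\<^esub> (x \<oplus>\<^bsub>Q\<^esub> y) = a \<odot>\<^bsub>Q\<^esub> x \<oplus>\<^bsub>Q\<^esub> a \<odot>\<^bsub>Q\<^esub> y"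
      using a by (simp add: cls_smult cls_add PL.lsmult_closed PL.lsmult_r_distr)
  next
    fix a b x assume ab: "a \<in> carrier R" "b \<in> carrier R" and "x \<in> carrier Q"
    then obtain u where "u \<in> carrier P" "x = cls u" by (metis Q_cases)
    then show "(a \<otimes>\<^bsub>R\<^esub> b) \<odot>\<^bsub>Q\<^esub> x = a \<odot>\<^bsub>Q\<^esub> (b \<odot>\<^bsub>Q\<^esub> x)"
      using ab by (simp add: cls_smult PL.lsmult_closed PL.lsmult_assoc1)
  next
    fix x assume "x \<in> carrier Q"
    then obtain u where "u \<in> carrier P" "x = cls u" by (metis Q_cases)
    then show "\<one>\<^bsub>R\<^esub> \<odot>\<^bsub>Q\<^esub> x = x"
      by (simp add: cls_smult PL.lsmult_one)
  qed
qed

lemma Q_finsum: assumes "finite S" "f \<in> S \<rightarrow> carrier P"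
  shows "finsum Q (\<lambda>j. cls (f j)) S = cls (finsum P f S)"
  using assms
proof (induction S rule: finite_induct)
  case empty
  interpret PP: abelian_group P by (rule P_abgroup)
  interpret QQ: abelian_group Q by (rule Q_abgroup)
  show ?case by (simp add: Q_zero)
next
  case (insert a S)
  interpret PP: abelian_group P by (rule P_abgroup)
  interpret QQ: abelian_group Q by (rule Q_abgroup)
  have fa: "f a \<in> carrier P" and fS: "f \<in> S \<rightarrow> carrier P" using insert by auto
  have "finsum Q (\<lambda>j. cls (f j)) (insert a S) = cls (f a) \<oplus>\<^bsub>Q\<^esub> finsum Q (\<lambda>j. cls (f j)) S"
    using insert fa fS cls_in by (intro QQ.add.finprod_insert) auto
  also have "\<dots> = cls (f a \<oplus>\<^bsub>P\<^esub> finsum P f S)" using insert(3)[OF fS] cls_add fa fS by simp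
  also have "\<dots> = cls (finsum P f (insert a S))" using insert fa fS by simp
  finally show ?case .
qed

end

abbreviation supp :: "'r ring \<Rightarrow> 'j set \<Rightarrow> ('i \<Rightarrow> 'j \<Rightarrow> 'r) \<Rightarrow> 'i \<Rightarrow> 'j set" where
  "supp R J c i \<equiv> {j \<in> J. c i j \<noteq> \<zero>\<^bsub>R\<^esub>}"

lemma solves_local:
  assumes lm: "left_module R M" and ls: "lin_system R M I J c m" and I0: "I0 \<subseteq> I"
    and sol: "solves R M J c m I0 x"
    and y: "\<forall>j\<in>J. y j \<in> carrier M"
    and agree: "\<And>i j. i \<in> I0 \<Longrightarrow> j \<in> J \<Longrightarrow> c i j \<noteq> \<zero>\<^bsub>R\<^esub> \<Longrightarrow> y j = x j"
  shows "solves R M J c m I0 y"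
proof -
  interpret LM: left_module R M by (rule lm)
  have "finsum M (\<lambda>j. c i j \<odot>\<^bsub>M\<^esub> y j) (supp R J c i) = m i" if i: "i \<in> I0" for i
  proof -
    have "finsum M (\<lambda>j. c i j \<odot>\<^bsub>M\<^esub> y j) (supp R J c i) = finsum M (\<lambda>j. c i j \<odot>\<^bsub>M\<^esub> x j) (supp R J c i)"
    proof (rule LM.add.finprod_cong')
      show "(\<lambda>j. c i j \<odot>\<^bsub>M\<^esub> x j) \<in> supp R J c i \<rightarrow> carrier M"
        using ls sol i I0 by (auto simp: lin_system_def solves_def intro!: LM.lsmult_closed)
      show "\<And>j. j \<in> supp R J c i \<Longrightarrow> c i j \<odot>\<^bsub>M\<^esub> y j = c i j \<odot>\<^bsub>M\<^esub> x j" using agree i by auto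
    qed simp
    then show ?thesis using sol i by (simp add: solves_def)
  qed
  then show ?thesis using y by (simp add: solves_def)
qed

lemma inj_into_infinite:
  assumes "countable S" "infinite (UNIV :: 'x set)"
  obtains f :: "'a \<Rightarrow> 'x" where "inj_on f S"
proof -
  obtain g :: "'a \<Rightarrow> nat" where g: "inj_on g S" using assms(1) by (auto simp: countable_def)
  obtain h :: "nat \<Rightarrow> 'x" where h: "inj h" using infinite_countable_subset[OF assms(2)] by blast
  have "inj_on (h \<circ> g) S" using g h by (simp add: comp_inj_on inj_on_subset)
  then show ?thesis using that by blast
qed

lemma countable_compact:
  fixes I :: "'i set" and J :: "'j set" and M :: "('r, 'b) module" and R :: "'r ring"
  assumes lm: "left_module R M"
    and ac: "alg_compact_idx TYPE('x) TYPE('y) R M"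
    and infx: "infinite (UNIV :: 'x set)" and infy: "infinite (UNIV :: 'y set)"
    and ls: "lin_system R M I J c m" and cI: "countable I"
    and fs: "\<forall>I0\<subseteq>I. finite I0 \<longrightarrow> (\<exists>x. solves R M J c m I0 x)"
  shows "\<exists>x. solves R M J c m I x"
proof -
  interpret LM: left_module R M by (rule lm)
  define V where "V = (\<Union>i\<in>I. supp R J c i)"
  have VJ: "V \<subseteq> J" unfolding V_def by auto
  have cV: "countable V" unfolding V_def using cI ls
    by (intro countable_UN) (auto simp: lin_system_def intro: countable_finite)
  obtain fi :: "'i \<Rightarrow> 'x" where fi: "inj_on fi I" using inj_into_infinite[OF cI infx] by blast
  obtain fj :: "'j \<Rightarrow> 'y" where fj: "inj_on fj V" using inj_into_infinite[OF cV infy] by blast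
  define ii where "ii = inv_into I fi"
  define jj where "jj = inv_into V fj"
  have ii: "\<And>i. i \<in> I \<Longrightarrow> ii (fi i) = i" using fi by (simp add: ii_def)
  have jj: "\<And>j. j \<in> V \<Longrightarrow> jj (fj j) = j" using fj by (simp add: jj_def)
  have jjV: "\<And>j'. j' \<in> fj ` V \<Longrightarrow> jj j' \<in> V" using jj by auto
  define I' where "I' = fi ` I"
  define J' where "J' = fj ` V"
  define c' where "c' = (\<lambda>i' j'. c (ii i') (jj j'))"
  define m' where "m' = (\<lambda>i'. m (ii i'))"
  have suppV: "\<And>i. i \<in> I \<Longrightarrow> supp R J c i \<subseteq> V" unfolding V_def by auto
  have supp': "supp R J' c' (fi i) = fj ` supp R J c i" if i: "i \<in> I" for i
  proof
    show "supp R J' c' (fi i) \<subseteq> fj ` supp R J c i"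
    proof
      fix j' assume "j' \<in> supp R J' c' (fi i)"
      then obtain j where j: "j \<in> V" "j' = fj j" "c i j \<noteq> \<zero>\<^bsub>R\<^esub>" unfolding J'_def c'_def using ii[OF i] jj by auto
      then show "j' \<in> fj ` supp R J c i" using VJ by auto
    qed
    show "fj ` supp R J c i \<subseteq> supp R J' c' (fi i)"
      using suppV[OF i] ii[OF i] jj unfolding J'_def c'_def by auto
  qed
  have ls': "lin_system R M I' J' c' m'"
    unfolding lin_system_def
  proof
    fix i' assume "i' \<in> I'"
    then obtain i where i: "i \<in> I" "i' = fi i" unfolding I'_def by auto
    have "\<forall>j'\<in>J'. c' i' j' \<in> carrier R"
      using ls i ii jj VJ unfolding lin_system_def J'_def c'_def by auto
    moreover have "finite (supp R J' c' i')" using supp'[OF i(1)] ls i unfolding lin_system_def by auto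
    moreover have "m' i' \<in> carrier M" using ls i ii unfolding lin_system_def m'_def by auto
    ultimately show "(\<forall>j'\<in>J'. c' i' j' \<in> carrier R) \<and> finite (supp R J' c' i') \<and> m' i' \<in> carrier M" by blast
  qed
  have sum_tr: "finsum M (\<lambda>j'. c' (fi i) j' \<odot>\<^bsub>M\<^esub> x' j') (supp R J' c' (fi i))
        = finsum M (\<lambda>j. c i j \<odot>\<^bsub>M\<^esub> x j) (supp R J c i)"
    if i: "i \<in> I" and xx: "\<And>j. j \<in> V \<Longrightarrow> x' (fj j) = x j" and xc: "\<And>j. j \<in> V \<Longrightarrow> x j \<in> carrier M" for i x x'
  proof -
    have inj: "inj_on fj (supp R J c i)" using fj suppV[OF i] inj_on_subset by blast
    have "finsum M (\<lambda>j'. c' (fi i) j' \<odot>\<^bsub>M\<^esub> x' j') (fj ` supp R J c i)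
        = finsum M (\<lambda>j. c' (fi i) (fj j) \<odot>\<^bsub>M\<^esub> x' (fj j)) (supp R J c i)"
    proof (rule LM.add.finprod_reindex[OF _ inj])
      show "(\<lambda>j'. c' (fi i) j' \<odot>\<^bsub>M\<^esub> x' j') \<in> fj ` supp R J c i \<rightarrow> carrier M"
        using suppV[OF i] ls i xx xc jj ii unfolding lin_system_def c'_def
        by (auto intro!: LM.lsmult_closed)
    qed
    also have "\<dots> = finsum M (\<lambda>j. c i j \<odot>\<^bsub>M\<^esub> x j) (supp R J c i)"
    proof (rule LM.add.finprod_cong')
      show "(\<lambda>j. c i j \<odot>\<^bsub>M\<^esub> x j) \<in> supp R J c i \<rightarrow> carrier M"
        using suppV[OF i] ls i xc unfolding lin_system_def by (auto intro!: LM.lsmult_closed)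
      show "\<And>j. j \<in> supp R J c i \<Longrightarrow> c' (fi i) (fj j) \<odot>\<^bsub>M\<^esub> x' (fj j) = c i j \<odot>\<^bsub>M\<^esub> x j"
        using suppV[OF i] xx ii[OF i] jj unfolding c'_def by auto
    qed simp
    finally show ?thesis using supp'[OF i] by simp
  qed
  have fs': "\<forall>I0\<subseteq>I'. finite I0 \<longrightarrow> (\<exists>x. solves R M J' c' m' I0 x)"
  proof (intro allI impI)
    fix I0' assume I0': "I0' \<subseteq> I'" "finite I0'"
    define I0 where "I0 = ii ` I0'"
    have I0I: "I0 \<subseteq> I" using I0' ii unfolding I0_def I'_def by auto
    have "finite I0" using I0' unfolding I0_def by simp
    then obtain x where x: "solves R M J c m I0 x" using fs I0I by blast
    have xc: "\<And>j. j \<in> J \<Longrightarrow> x j \<in> carrier M" using x by (simp add: solves_def)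
    show "\<exists>x. solves R M J' c' m' I0' x"
    proof (intro exI[of _ "\<lambda>j'. x (jj j')"])
      show "solves R M J' c' m' I0' (\<lambda>j'. x (jj j'))"
        unfolding solves_def
      proof (intro conjI ballI)
        fix j' assume "j' \<in> J'" then show "x (jj j') \<in> carrier M" using jjV VJ xc unfolding J'_def by blast
      next
        fix i' assume "i' \<in> I0'"
        then obtain i where i: "i \<in> I" "i' = fi i" "i \<in> I0" using I0' ii unfolding I'_def I0_def by force
        have "finsum M (\<lambda>j'. c' (fi i) j' \<odot>\<^bsub>M\<^esub> x (jj j')) (supp R J' c' (fi i))
            = finsum M (\<lambda>j. c i j \<odot>\<^bsub>M\<^esub> x j) (supp R J c i)"
          using sum_tr[OF i(1), of "\<lambda>j'. x (jj j')" x] jj xc VJ by auto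
        also have "\<dots> = m i" using x i by (simp add: solves_def)
        finally show "finsum M (\<lambda>j'. c' i' j' \<odot>\<^bsub>M\<^esub> x (jj j')) (supp R J' c' i') = m' i'"
          using i ii unfolding m'_def by simp
      qed
    qed
  qed
  obtain x' where x': "solves R M J' c' m' I' x'"
    using ac ls' fs' unfolding alg_compact_idx_def by blast
  define x where "x = (\<lambda>j. if j \<in> V then x' (fj j) else \<zero>\<^bsub>M\<^esub>)"
  have xc: "\<And>j. j \<in> V \<Longrightarrow> x j \<in> carrier M" using x' unfolding x_def solves_def J'_def by auto
  show ?thesis
  proof (intro exI[of _ x])
    show "solves R M J c m I x"
      unfolding solves_def
    proof (intro conjI ballI)
      fix j assume "j \<in> J" then show "x j \<in> carrier M" using xc unfolding x_def by auto
    next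
      fix i assume i: "i \<in> I"
      have "finsum M (\<lambda>j. c i j \<odot>\<^bsub>M\<^esub> x j) (supp R J c i) = finsum M (\<lambda>j'. c' (fi i) j' \<odot>\<^bsub>M\<^esub> x' j') (supp R J' c' (fi i))"
        using sum_tr[OF i, of x' x] xc unfolding x_def by auto
      also have "\<dots> = m' (fi i)" using x' i unfolding solves_def I'_def by auto
      finally show "finsum M (\<lambda>j. c i j \<odot>\<^bsub>M\<^esub> x j) (supp R J c i) = m i" using ii[OF i] unfolding m'_def by simp
    qed
  qed
qed


context fam begin

lemma P_sum_at:
  assumes S: "finite S" and r: "\<And>j. j \<in> S \<Longrightarrow> r j \<in> carrier R" and u: "\<And>j. j \<in> S \<Longrightarrow> u j \<in> carrier P"
    and a: "\<alpha> \<in> A"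
  shows "finsum P (\<lambda>j. r j \<odot>\<^bsub>P\<^esub> u j) S \<alpha> = finsum (M \<alpha>) (\<lambda>j. r j \<odot>\<^bsub>M \<alpha>\<^esub> u j \<alpha>) S"
proof -
  interpret PL: left_module R P by (rule P_lm)
  interpret Ma: left_module R "M \<alpha>" using a by simp
  have "finsum P (\<lambda>j. r j \<odot>\<^bsub>P\<^esub> u j) S \<alpha> = finsum (M \<alpha>) (\<lambda>j. (r j \<odot>\<^bsub>P\<^esub> u j) \<alpha>) S"
    using S r u a by (intro P_finsum) (auto intro!: PL.lsmult_closed)
  also have "\<dots> = finsum (M \<alpha>) (\<lambda>j. r j \<odot>\<^bsub>M \<alpha>\<^esub> u j \<alpha>) S"
  proof (rule Ma.add.finprod_cong')
    show "(\<lambda>j. r j \<odot>\<^bsub>M \<alpha>\<^esub> u j \<alpha>) \<in> S \<rightarrow> carrier (M \<alpha>)" using r u a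
      by (auto simp: P_carrier intro!: Ma.lsmult_closed)
  qed (use a in \<open>auto simp: P_smult\<close>)
  finally show ?thesis .
qed

lemma Q_sum_cls:
  assumes S: "finite S" and r: "\<And>j. j \<in> S \<Longrightarrow> r j \<in> carrier R" and u: "\<And>j. j \<in> S \<Longrightarrow> u j \<in> carrier P"
  shows "finsum Q (\<lambda>j. r j \<odot>\<^bsub>Q\<^esub> cls (u j)) S = cls (finsum P (\<lambda>j. r j \<odot>\<^bsub>P\<^esub> u j) S)"
proof -
  interpret PL: left_module R P by (rule P_lm)
  interpret QL: left_module R Q by (rule Q_lm)
  have "finsum Q (\<lambda>j. r j \<odot>\<^bsub>Q\<^esub> cls (u j)) S = finsum Q (\<lambda>j. cls (r j \<odot>\<^bsub>P\<^esub> u j)) S"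
  proof (rule QL.add.finprod_cong')
    show "(\<lambda>j. cls (r j \<odot>\<^bsub>P\<^esub> u j)) \<in> S \<rightarrow> carrier Q" using r u by (auto intro!: cls_in PL.lsmult_closed)
  qed (use r u in \<open>auto simp: cls_smult\<close>)
  also have "\<dots> = cls (finsum P (\<lambda>j. r j \<odot>\<^bsub>P\<^esub> u j) S)"
    using S r u by (intro Q_finsum) (auto intro!: PL.lsmult_closed)
  finally show ?thesis .
qed

lemma Q_countable_compact:
  fixes I :: "'i set" and J :: "'j set" and B :: "'a set"
  assumes BA: "B \<subseteq> A" and cB: "countable B"
    and ac: "\<forall>\<alpha>\<in>A-B. alg_compact_idx TYPE('x) TYPE('y) R (M \<alpha>)"
    and infx: "infinite (UNIV :: 'x set)" and infy: "infinite (UNIV :: 'y set)"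
    and ls: "lin_system R Q I J c m" and cI: "countable I"
    and fs: "\<forall>I0\<subseteq>I. finite I0 \<longrightarrow> (\<exists>x. solves R Q J c m I0 x)"
  shows "\<exists>x. solves R Q J c m I x"
proof (cases "I = {}")
  case True
  interpret QL: left_module R Q by (rule Q_lm)
  show ?thesis using True by (intro exI[of _ "\<lambda>j. \<zero>\<^bsub>Q\<^esub>"]) (simp add: solves_def)
next
  case False
  interpret PL: left_module R P by (rule P_lm)
  interpret QL: left_module R Q by (rule Q_lm)
  have cR: "\<And>i j. i \<in> I \<Longrightarrow> j \<in> J \<Longrightarrow> c i j \<in> carrier R" and finS: "\<And>i. i \<in> I \<Longrightarrow> finite (supp R J c i)"
    and mQ: "\<And>i. i \<in> I \<Longrightarrow> m i \<in> carrier Q" using ls by (auto simp: lin_system_def)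
  define e where "e = from_nat_into I"
  have rng: "range e = I" using False cI by (simp add: e_def range_from_nat_into)
  define In where "In n = e ` {..<n}" for n
  have In_sub: "In n \<subseteq> I" for n using rng unfolding In_def by auto
  have In_fin: "finite (In n)" for n unfolding In_def by simp
  have "\<forall>i\<in>I. \<exists>u. u \<in> carrier P \<and> m i = cls u" using mQ unfolding Q_carrier by blast
  then obtain mt where mt0: "\<forall>i\<in>I. mt i \<in> carrier P \<and> m i = cls (mt i)" by (rule bchoice[elim_format]) blast
  have mt: "\<And>i. i \<in> I \<Longrightarrow> mt i \<in> carrier P \<and> m i = cls (mt i)" using mt0 by blast
  define solvA where "solvA \<alpha> K \<longleftrightarrow> (\<exists>y. solves R (M \<alpha>) J c (\<lambda>i. mt i \<alpha>) K y)" for \<alpha> K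
  have solv_mono: "solvA \<alpha> K" if "solvA \<alpha> K'" "K \<subseteq> K'" for \<alpha> K K'
    using that unfolding solvA_def solves_def by blast
  have solv_empty: "solvA \<alpha> {}" if a: "\<alpha> \<in> A" for \<alpha>
  proof -
    interpret Ma: left_module R "M \<alpha>" using a by simp
    show ?thesis unfolding solvA_def solves_def by (intro exI[of _ "\<lambda>j. \<zero>\<^bsub>M \<alpha>\<^esub>"]) simp
  qed
  have E_fin: "finite {\<alpha> \<in> A. \<not> solvA \<alpha> K}" if K: "K \<subseteq> I" "finite K" for K
  proof -
    obtain x where x: "solves R Q J c m K x" using fs K by blast
    have "\<forall>j\<in>J. \<exists>u. u \<in> carrier P \<and> x j = cls u" using x unfolding Q_carrier solves_def by blast
    then obtain xt where xt0: "\<forall>j\<in>J. xt j \<in> carrier P \<and> x j = cls (xt j)" by (rule bchoice[elim_format]) blast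
    have xt: "\<And>j. j \<in> J \<Longrightarrow> xt j \<in> carrier P \<and> x j = cls (xt j)" using xt0 by blast
    define D where "D i = {\<alpha> \<in> A. finsum P (\<lambda>j. c i j \<odot>\<^bsub>P\<^esub> xt j) (supp R J c i) \<alpha> \<noteq> mt i \<alpha>}" for i
    have Dfin: "finite (D i)" if i: "i \<in> K" for i
    proof -
      have iI: "i \<in> I" using i K by auto
      have "cls (finsum P (\<lambda>j. c i j \<odot>\<^bsub>P\<^esub> xt j) (supp R J c i))
           = finsum Q (\<lambda>j. c i j \<odot>\<^bsub>Q\<^esub> cls (xt j)) (supp R J c i)"
        using finS[OF iI] cR[OF iI] xt by (intro Q_sum_cls[symmetric]) auto
      also have "\<dots> = finsum Q (\<lambda>j. c i j \<odot>\<^bsub>Q\<^esub> x j) (supp R J c i)"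
        using xt by (intro QL.add.finprod_cong') (auto simp: Pi_def intro!: QL.lsmult_closed cR[OF iI] cls_in)
      also have "\<dots> = m i" using x i by (simp add: solves_def)
      also have "\<dots> = cls (mt i)" using mt[OF iI] by simp
      finally have eq: "cls (finsum P (\<lambda>j. c i j \<odot>\<^bsub>P\<^esub> xt j) (supp R J c i)) = cls (mt i)" .
      have sci: "finsum P (\<lambda>j. c i j \<odot>\<^bsub>P\<^esub> xt j) (supp R J c i) \<in> carrier P"
        using cR[OF iI] xt by (intro PL.add.finprod_closed) (auto intro!: PL.lsmult_closed)
      show ?thesis using eq cls_eq[OF sci, of "mt i"] mt[OF iI] unfolding D_def by simp
    qed
    have "{\<alpha> \<in> A. \<not> solvA \<alpha> K} \<subseteq> (\<Union>i\<in>K. D i)"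
    proof
      fix \<alpha> assume "\<alpha> \<in> {\<alpha> \<in> A. \<not> solvA \<alpha> K}"
      then have a: "\<alpha> \<in> A" and ns: "\<not> solvA \<alpha> K" by auto
      interpret Ma: left_module R "M \<alpha>" using a by simp
      show "\<alpha> \<in> (\<Union>i\<in>K. D i)"
      proof (rule ccontr)
        assume nD: "\<alpha> \<notin> (\<Union>i\<in>K. D i)"
        have "solves R (M \<alpha>) J c (\<lambda>i. mt i \<alpha>) K (\<lambda>j. xt j \<alpha>)"
          unfolding solves_def
        proof (intro conjI ballI)
          fix j assume "j \<in> J" then show "xt j \<alpha> \<in> carrier (M \<alpha>)" using xt a by (auto simp: P_carrier)
        next
          fix i assume i: "i \<in> K"
          have iI: "i \<in> I" using i K by auto
          have "finsum (M \<alpha>) (\<lambda>j. c i j \<odot>\<^bsub>M \<alpha>\<^esub> xt j \<alpha>) (supp R J c i)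
              = finsum P (\<lambda>j. c i j \<odot>\<^bsub>P\<^esub> xt j) (supp R J c i) \<alpha>"
            using finS[OF iI] cR[OF iI] xt a by (intro P_sum_at[symmetric]) auto
          also have "\<dots> = mt i \<alpha>" using nD i a unfolding D_def by auto
          finally show "finsum (M \<alpha>) (\<lambda>j. c i j \<odot>\<^bsub>M \<alpha>\<^esub> xt j \<alpha>) (supp R J c i) = mt i \<alpha>" .
        qed
        then show False using ns unfolding solvA_def by blast
      qed
    qed
    moreover have "finite (\<Union>i\<in>K. D i)" using K Dfin by auto
    ultimately show ?thesis by (rule finite_subset)
  qed
  have compact: "solvA \<alpha> I" if a: "\<alpha> \<in> A - B" and all: "\<forall>n. solvA \<alpha> (In n)" for \<alpha>
  proof -
    interpret Ma: left_module R "M \<alpha>" using a by simp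
    have ls': "lin_system R (M \<alpha>) I J c (\<lambda>i. mt i \<alpha>)"
      using ls mt a unfolding lin_system_def by (auto simp: P_carrier)
    have fs': "\<forall>I0\<subseteq>I. finite I0 \<longrightarrow> (\<exists>y. solves R (M \<alpha>) J c (\<lambda>i. mt i \<alpha>) I0 y)"
    proof (intro allI impI)
      fix I0 assume I0: "I0 \<subseteq> I" "finite I0"
      then have "I0 \<subseteq> range e" using rng by simp
      then have "\<forall>i\<in>I0. \<exists>k. i = e k" by blast
      then obtain kk where kk: "\<forall>i\<in>I0. i = e (kk i)" by (rule bchoice[elim_format]) blast
      have "I0 \<subseteq> In (Suc (Max (kk ` I0)))"
      proof
        fix i assume i: "i \<in> I0"
        have "kk i \<le> Max (kk ` I0)" using I0 i by (intro Max_ge) auto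
        then show "i \<in> In (Suc (Max (kk ` I0)))" using kk i unfolding In_def by auto
      qed
      then obtain n where "I0 \<subseteq> In n" by blast
      then show "\<exists>y. solves R (M \<alpha>) J c (\<lambda>i. mt i \<alpha>) I0 y"
        using all solv_mono unfolding solvA_def by blast
    qed
    show ?thesis unfolding solvA_def
      using countable_compact[OF _ _ infx infy ls' cI fs'] ac a by simp
  qed
  define h where "h = to_nat_on B"
  define Pt where "Pt \<alpha> n \<longleftrightarrow> \<not> solvA \<alpha> (In (Suc n)) \<or> (\<alpha> \<in> B \<and> n = h \<alpha>)" for \<alpha> n
  define t where "t \<alpha> = (LEAST n. Pt \<alpha> n)" for \<alpha>
  define K where "K \<alpha> = (if solvA \<alpha> I then I else In (t \<alpha>))" for \<alpha>
  have ex_t: "\<exists>n. Pt \<alpha> n" if a: "\<alpha> \<in> A" and ns: "\<not> solvA \<alpha> I" for \<alpha>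
  proof (cases "\<alpha> \<in> B")
    case True then show ?thesis unfolding Pt_def by blast
  next
    case False
    then obtain n where n: "\<not> solvA \<alpha> (In n)" using compact a ns by blast
    then have "n \<noteq> 0" using solv_empty[OF a] unfolding In_def by (cases n) auto
    then obtain n' where "n = Suc n'" using not0_implies_Suc by blast
    then show ?thesis using n unfolding Pt_def by blast
  qed
  have solvK: "solvA \<alpha> (K \<alpha>)" if a: "\<alpha> \<in> A" for \<alpha>
  proof (cases "solvA \<alpha> I")
    case True then show ?thesis unfolding K_def by simp
  next
    case False
    have less: "solvA \<alpha> (In (Suc n))" if "n < t \<alpha>" for n
      using not_less_Least[OF that[unfolded t_def]] unfolding Pt_def by blast
    show ?thesis
    proof (cases "t \<alpha>")
      case 0 then show ?thesis using False solv_empty a unfolding K_def In_def by simp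
    next
      case (Suc k) then show ?thesis using False less[of k] unfolding K_def by simp
    qed
  qed
  have hfin: "finite {\<alpha> \<in> B. h \<alpha> \<le> k}" for k
  proof -
    have "inj_on h B" using cB unfolding h_def by (rule inj_on_to_nat_on)
    then have inj: "inj_on h {\<alpha> \<in> B. h \<alpha> \<le> k}" by (rule inj_on_subset) auto
    have "h ` {\<alpha> \<in> B. h \<alpha> \<le> k} \<subseteq> {..k}" by auto
    then have "finite (h ` {\<alpha> \<in> B. h \<alpha> \<le> k})" using finite_subset by blast
    then show ?thesis using inj finite_imageD by blast
  qed
  have Kfin: "finite {\<alpha> \<in> A. i \<notin> K \<alpha>}" if i: "i \<in> I" for i
  proof -
    obtain k where k: "i = e k" using i rng by auto
    have "{\<alpha> \<in> A. i \<notin> K \<alpha>} \<subseteq> (\<Union>n\<in>{..k}. {\<alpha> \<in> A. \<not> solvA \<alpha> (In (Suc n))}) \<union> {\<alpha> \<in> B. h \<alpha> \<le> k}"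
    proof
      fix \<alpha> assume "\<alpha> \<in> {\<alpha> \<in> A. i \<notin> K \<alpha>}"
      then have a: "\<alpha> \<in> A" and nK: "i \<notin> K \<alpha>" by auto
      then have ns: "\<not> solvA \<alpha> I" using i unfolding K_def by auto
      then have nI: "i \<notin> In (t \<alpha>)" using nK unfolding K_def by simp
      have tk: "t \<alpha> \<le> k"
      proof (rule ccontr)
        assume "\<not> t \<alpha> \<le> k" then have "k < t \<alpha>" by simp
        then have "i \<in> In (t \<alpha>)" using k unfolding In_def by auto
        then show False using nI by simp
      qed
      have "Pt \<alpha> (t \<alpha>)" unfolding t_def using ex_t[OF a ns] by (rule LeastI_ex)
      then show "\<alpha> \<in> (\<Union>n\<in>{..k}. {\<alpha> \<in> A. \<not> solvA \<alpha> (In (Suc n))}) \<union> {\<alpha> \<in> B. h \<alpha> \<le> k}"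
        unfolding Pt_def using tk a by auto
    qed
    moreover have "finite ((\<Union>n\<in>{..k}. {\<alpha> \<in> A. \<not> solvA \<alpha> (In (Suc n))}) \<union> {\<alpha> \<in> B. h \<alpha> \<le> k})"
    proof (rule finite_UnI)
      show "finite (\<Union>n\<in>{..k}. {\<alpha> \<in> A. \<not> solvA \<alpha> (In (Suc n))})"
        by (rule finite_UN_I) (simp, rule E_fin[OF In_sub In_fin])
    qed (rule hfin)
    ultimately show ?thesis by (rule finite_subset)
  qed
  define ys where "ys \<alpha> = (SOME y. solves R (M \<alpha>) J c (\<lambda>i. mt i \<alpha>) (K \<alpha>) y)" for \<alpha>
  have ys: "solves R (M \<alpha>) J c (\<lambda>i. mt i \<alpha>) (K \<alpha>) (ys \<alpha>)" if a: "\<alpha> \<in> A" for \<alpha>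
    using solvK[OF a] unfolding solvA_def ys_def by (rule someI_ex)
  define xt where "xt j = (\<lambda>\<alpha>\<in>A. ys \<alpha> j)" for j
  have xtP: "xt j \<in> carrier P" if j: "j \<in> J" for j
    unfolding xt_def P_restrict_carrier using ys j by (auto simp: solves_def)
  show ?thesis
  proof (intro exI[of _ "\<lambda>j. cls (xt j)"])
    show "solves R Q J c m I (\<lambda>j. cls (xt j))"
      unfolding solves_def
    proof (intro conjI ballI)
      fix j assume "j \<in> J" then show "cls (xt j) \<in> carrier Q" using xtP cls_in by blast
    next
      fix i assume i: "i \<in> I"
      have sc: "finsum P (\<lambda>j. c i j \<odot>\<^bsub>P\<^esub> xt j) (supp R J c i) \<in> carrier P"
        using cR[OF i] xtP by (intro PL.add.finprod_closed) (auto intro!: PL.lsmult_closed)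
      have "finsum Q (\<lambda>j. c i j \<odot>\<^bsub>Q\<^esub> cls (xt j)) (supp R J c i) = cls (finsum P (\<lambda>j. c i j \<odot>\<^bsub>P\<^esub> xt j) (supp R J c i))"
        using finS[OF i] cR[OF i] xtP by (intro Q_sum_cls) auto
      also have "\<dots> = cls (mt i)"
      proof -
        have "{\<alpha> \<in> A. finsum P (\<lambda>j. c i j \<odot>\<^bsub>P\<^esub> xt j) (supp R J c i) \<alpha> \<noteq> mt i \<alpha>} \<subseteq> {\<alpha> \<in> A. i \<notin> K \<alpha>}"
        proof
          fix \<alpha> assume "\<alpha> \<in> {\<alpha> \<in> A. finsum P (\<lambda>j. c i j \<odot>\<^bsub>P\<^esub> xt j) (supp R J c i) \<alpha> \<noteq> mt i \<alpha>}"
          then have a: "\<alpha> \<in> A" and ne: "finsum P (\<lambda>j. c i j \<odot>\<^bsub>P\<^esub> xt j) (supp R J c i) \<alpha> \<noteq> mt i \<alpha>" by auto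
          show "\<alpha> \<in> {\<alpha> \<in> A. i \<notin> K \<alpha>}"
          proof (rule ccontr)
            assume "\<alpha> \<notin> {\<alpha> \<in> A. i \<notin> K \<alpha>}"
            then have iK: "i \<in> K \<alpha>" using a by auto
            have "finsum P (\<lambda>j. c i j \<odot>\<^bsub>P\<^esub> xt j) (supp R J c i) \<alpha>
                = finsum (M \<alpha>) (\<lambda>j. c i j \<odot>\<^bsub>M \<alpha>\<^esub> xt j \<alpha>) (supp R J c i)"
              using finS[OF i] cR[OF i] xtP a by (intro P_sum_at) auto
            also have "\<dots> = finsum (M \<alpha>) (\<lambda>j. c i j \<odot>\<^bsub>M \<alpha>\<^esub> ys \<alpha> j) (supp R J c i)"
              using a unfolding xt_def by simp
            also have "\<dots> = mt i \<alpha>" using ys[OF a] iK by (simp add: solves_def)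
            finally show False using ne by simp
          qed
        qed
        then have "finite {\<alpha> \<in> A. finsum P (\<lambda>j. c i j \<odot>\<^bsub>P\<^esub> xt j) (supp R J c i) \<alpha> \<noteq> mt i \<alpha>}"
          using Kfin[OF i] finite_subset by blast
        then show ?thesis using cls_eq[OF sc, of "mt i"] mt[OF i] by simp
      qed
      also have "\<dots> = m i" using mt[OF i] by simp
      finally show "finsum Q (\<lambda>j. c i j \<odot>\<^bsub>Q\<^esub> cls (xt j)) (supp R J c i) = m i" .
    qed
  qed
qed

end

context left_module begin

lemma lc_add:
  assumes a: "\<And>j. j \<in> S \<Longrightarrow> a j \<in> carrier R" and x: "\<And>j. j \<in> S \<Longrightarrow> x j \<in> carrier M"
    and y: "\<And>j. j \<in> S \<Longrightarrow> y j \<in> carrier M"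
  shows "finsum M (\<lambda>j. a j \<odot>\<^bsub>M\<^esub> (x j \<oplus>\<^bsub>M\<^esub> y j)) S = finsum M (\<lambda>j. a j \<odot>\<^bsub>M\<^esub> x j) S \<oplus>\<^bsub>M\<^esub> finsum M (\<lambda>j. a j \<odot>\<^bsub>M\<^esub> y j) S"
proof -
  have "finsum M (\<lambda>j. a j \<odot>\<^bsub>M\<^esub> (x j \<oplus>\<^bsub>M\<^esub> y j)) S = finsum M (\<lambda>j. a j \<odot>\<^bsub>M\<^esub> x j \<oplus>\<^bsub>M\<^esub> a j \<odot>\<^bsub>M\<^esub> y j) S"
    using a x y by (intro M.add.finprod_cong') (auto simp: lsmult_r_distr intro!: lsmult_closed)
  also have "\<dots> = finsum M (\<lambda>j. a j \<odot>\<^bsub>M\<^esub> x j) S \<oplus>\<^bsub>M\<^esub> finsum M (\<lambda>j. a j \<odot>\<^bsub>M\<^esub> y j) S"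
    using a x y by (intro M.add.finprod_multf) (auto intro!: lsmult_closed)
  finally show ?thesis .
qed

lemma lc_zero:
  assumes a: "\<And>j. j \<in> S \<Longrightarrow> a j \<in> carrier R"
  shows "finsum M (\<lambda>j. a j \<odot>\<^bsub>M\<^esub> \<zero>\<^bsub>M\<^esub>) S = \<zero>\<^bsub>M\<^esub>"
proof -
  have "finsum M (\<lambda>j. a j \<odot>\<^bsub>M\<^esub> \<zero>\<^bsub>M\<^esub>) S = finsum M (\<lambda>j. \<zero>\<^bsub>M\<^esub>) S"
    using a by (intro M.add.finprod_cong') (auto simp: lsm_zero_r)
  then show ?thesis by simp
qed

lemma lc_minus:
  assumes a: "\<And>j. j \<in> S \<Longrightarrow> a j \<in> carrier R" and x: "\<And>j. j \<in> S \<Longrightarrow> x j \<in> carrier M"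
  shows "finsum M (\<lambda>j. a j \<odot>\<^bsub>M\<^esub> (\<ominus>\<^bsub>M\<^esub> x j)) S = \<ominus>\<^bsub>M\<^esub> finsum M (\<lambda>j. a j \<odot>\<^bsub>M\<^esub> x j) S"
proof -
  have c1: "finsum M (\<lambda>j. a j \<odot>\<^bsub>M\<^esub> (\<ominus>\<^bsub>M\<^esub> x j)) S \<in> carrier M"
    using a x by (intro M.add.finprod_closed) (auto intro!: lsmult_closed)
  have c2: "finsum M (\<lambda>j. a j \<odot>\<^bsub>M\<^esub> x j) S \<in> carrier M"
    using a x by (intro M.add.finprod_closed) (auto intro!: lsmult_closed)
  have "finsum M (\<lambda>j. a j \<odot>\<^bsub>M\<^esub> (\<ominus>\<^bsub>M\<^esub> x j)) S \<oplus>\<^bsub>M\<^esub> finsum M (\<lambda>j. a j \<odot>\<^bsub>M\<^esub> x j) S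
      = finsum M (\<lambda>j. a j \<odot>\<^bsub>M\<^esub> (\<ominus>\<^bsub>M\<^esub> x j \<oplus>\<^bsub>M\<^esub> x j)) S"
    using a x by (intro lc_add[symmetric]) auto
  also have "\<dots> = finsum M (\<lambda>j. a j \<odot>\<^bsub>M\<^esub> \<zero>\<^bsub>M\<^esub>) S"
    using a x by (intro M.add.finprod_cong') (auto simp: M.l_neg intro!: lsmult_closed)
  also have "\<dots> = \<zero>\<^bsub>M\<^esub>" using a by (rule lc_zero)
  finally show ?thesis using c1 c2 by (simp add: M.minus_equality)
qed

end

locale red = left_module R M for R :: "'r ring" and M :: "('r, 'q) module" +
  fixes I :: "'i set" and J :: "'j set" and c :: "'i \<Rightarrow> 'j \<Rightarrow> 'r" and m :: "'i \<Rightarrow> 'q"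
    and G :: "('j \<times> 'q) set" and j0 :: 'j
  assumes ls: "lin_system R M I J c m"
    and GJ: "G \<subseteq> J \<times> carrier M"
    and Gfun: "\<And>j q q'. (j, q) \<in> G \<Longrightarrow> (j, q') \<in> G \<Longrightarrow> q = q'"
    and Gfs: "\<And>I0. I0 \<subseteq> I \<Longrightarrow> finite I0 \<Longrightarrow> \<exists>x. solves R M J c m I0 x \<and> (\<forall>(j, q)\<in>G. x j = q)"
    and j0J: "j0 \<in> J" and j0G: "j0 \<notin> Domain G"
begin

definition T where
  "T I0 = {q. \<exists>x. solves R M J c m I0 x \<and> (\<forall>(j, q)\<in>G. x j = q) \<and> x j0 = q}"

definition H where
  "H I0 = {g. \<exists>z. solves R M J c (\<lambda>_. \<zero>\<^bsub>M\<^esub>) I0 z \<and> (\<forall>j\<in>Domain G. z j = \<zero>\<^bsub>M\<^esub>) \<and> z j0 = g}"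

lemma cRJ: "i \<in> I \<Longrightarrow> j \<in> J \<Longrightarrow> c i j \<in> carrier R"
  using ls by (auto simp: lin_system_def)
lemma finS: "i \<in> I \<Longrightarrow> finite (supp R J c i)"
  using ls by (auto simp: lin_system_def)
lemma mM: "i \<in> I \<Longrightarrow> m i \<in> carrier M"
  using ls by (auto simp: lin_system_def)

lemma sol_car: "solves R M J c b I0 x \<Longrightarrow> j \<in> J \<Longrightarrow> x j \<in> carrier M"
  by (simp add: solves_def)

lemma T_ne: "I0 \<subseteq> I \<Longrightarrow> finite I0 \<Longrightarrow> T I0 \<noteq> {}"
  using Gfs unfolding T_def by blast

lemma T_mono: "I0 \<subseteq> I1 \<Longrightarrow> T I1 \<subseteq> T I0"
  unfolding T_def solves_def by blast

lemma T_car: "q \<in> T I0 \<Longrightarrow> q \<in> carrier M"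
  unfolding T_def using sol_car j0J by blast

lemma H_car: "g \<in> H I0 \<Longrightarrow> g \<in> carrier M"
  unfolding H_def using sol_car j0J by blast

lemma T_diff:
  assumes q: "q \<in> T I0" and s: "s \<in> T I0" and I0: "I0 \<subseteq> I"
  shows "q \<oplus>\<^bsub>M\<^esub> \<ominus>\<^bsub>M\<^esub> s \<in> H I0"
proof -
  obtain xq where xq: "solves R M J c m I0 xq" "\<forall>(j, q)\<in>G. xq j = q" "xq j0 = q" using q unfolding T_def by blast
  obtain xs where xs: "solves R M J c m I0 xs" "\<forall>(j, q)\<in>G. xs j = q" "xs j0 = s" using s unfolding T_def by blast
  define z where "z j = xq j \<oplus>\<^bsub>M\<^esub> \<ominus>\<^bsub>M\<^esub> xs j" for j
  have zc: "j \<in> J \<Longrightarrow> z j \<in> carrier M" for j using xq xs sol_car unfolding z_def by blast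
  have "solves R M J c (\<lambda>_. \<zero>\<^bsub>M\<^esub>) I0 z"
    unfolding solves_def
  proof (intro conjI ballI)
    fix j assume "j \<in> J" then show "z j \<in> carrier M" by (rule zc)
  next
    fix i assume i: "i \<in> I0"
    have iI: "i \<in> I" using i I0 by auto
    have "finsum M (\<lambda>j. c i j \<odot>\<^bsub>M\<^esub> z j) (supp R J c i)
        = finsum M (\<lambda>j. c i j \<odot>\<^bsub>M\<^esub> xq j) (supp R J c i) \<oplus>\<^bsub>M\<^esub> finsum M (\<lambda>j. c i j \<odot>\<^bsub>M\<^esub> (\<ominus>\<^bsub>M\<^esub> xs j)) (supp R J c i)"
      unfolding z_def using xq xs sol_car cRJ[OF iI] by (intro lc_add) auto
    also have "\<dots> = m i \<oplus>\<^bsub>M\<^esub> \<ominus>\<^bsub>M\<^esub> m i"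
      using lc_minus[of "supp R J c i" "c i" xs] xq xs sol_car cRJ[OF iI] i by (auto simp: solves_def)
    also have "\<dots> = \<zero>\<^bsub>M\<^esub>" using mM[OF iI] by (simp add: M.r_neg)
    finally show "finsum M (\<lambda>j. c i j \<odot>\<^bsub>M\<^esub> z j) (supp R J c i) = \<zero>\<^bsub>M\<^esub>" .
  qed
  moreover have "\<forall>j\<in>Domain G. z j = \<zero>\<^bsub>M\<^esub>"
  proof
    fix j assume "j \<in> Domain G"
    then obtain q' where jq: "(j, q') \<in> G" by auto
    then have "q' \<in> carrier M" using GJ by auto
    moreover have "xq j = q'" "xs j = q'" using xq(2) xs(2) jq by fastforce+
    ultimately show "z j = \<zero>\<^bsub>M\<^esub>" unfolding z_def by (simp add: M.r_neg)
  qed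
  moreover have "z j0 = q \<oplus>\<^bsub>M\<^esub> \<ominus>\<^bsub>M\<^esub> s" using xq xs unfolding z_def by simp
  ultimately show ?thesis unfolding H_def by blast
qed

lemma T_add:
  assumes s: "s \<in> T I0" and g: "g \<in> H I0" and I0: "I0 \<subseteq> I"
  shows "s \<oplus>\<^bsub>M\<^esub> g \<in> T I0"
proof -
  obtain xs where xs: "solves R M J c m I0 xs" "\<forall>(j, q)\<in>G. xs j = q" "xs j0 = s" using s unfolding T_def by blast
  obtain z where z: "solves R M J c (\<lambda>_. \<zero>\<^bsub>M\<^esub>) I0 z" "\<forall>j\<in>Domain G. z j = \<zero>\<^bsub>M\<^esub>" "z j0 = g" using g unfolding H_def by blast
  define x where "x j = xs j \<oplus>\<^bsub>M\<^esub> z j" for j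
  have "solves R M J c m I0 x"
    unfolding solves_def
  proof (intro conjI ballI)
    fix j assume "j \<in> J" then show "x j \<in> carrier M" using xs z sol_car unfolding x_def by blast
  next
    fix i assume i: "i \<in> I0"
    have iI: "i \<in> I" using i I0 by auto
    have "finsum M (\<lambda>j. c i j \<odot>\<^bsub>M\<^esub> x j) (supp R J c i)
        = finsum M (\<lambda>j. c i j \<odot>\<^bsub>M\<^esub> xs j) (supp R J c i) \<oplus>\<^bsub>M\<^esub> finsum M (\<lambda>j. c i j \<odot>\<^bsub>M\<^esub> z j) (supp R J c i)"
      unfolding x_def using xs z sol_car cRJ[OF iI] by (intro lc_add) auto
    also have "\<dots> = m i \<oplus>\<^bsub>M\<^esub> \<zero>\<^bsub>M\<^esub>" using xs z i by (simp add: solves_def)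
    also have "\<dots> = m i" using mM[OF iI] by simp
    finally show "finsum M (\<lambda>j. c i j \<odot>\<^bsub>M\<^esub> x j) (supp R J c i) = m i" .
  qed
  moreover have "\<forall>(j, q)\<in>G. x j = q"
  proof (intro ballI, clarify)
    fix j q' assume jq: "(j, q') \<in> G"
    then have "q' \<in> carrier M" using GJ by auto
    moreover have "xs j = q'" using xs(2) jq by fastforce
    moreover have "z j = \<zero>\<^bsub>M\<^esub>" using z(2) jq by blast
    ultimately show "x j = q'" unfolding x_def by simp
  qed
  moreover have "x j0 = s \<oplus>\<^bsub>M\<^esub> g" using xs z unfolding x_def by simp
  ultimately show ?thesis unfolding T_def by blast
qed

end

context red begin

definition Phi :: "nat \<times> ('r \<times> 'r list) list \<Rightarrow> 'q set" where
  "Phi nL = {g \<in> carrier M. \<exists>zs. length zs = fst nL \<and> set zs \<subseteq> carrier M \<and>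
      (\<forall>(a, bs)\<in>set (snd nL). length bs = fst nL \<and>
         a \<odot>\<^bsub>M\<^esub> g \<oplus>\<^bsub>M\<^esub> finsum M (\<lambda>k. bs ! k \<odot>\<^bsub>M\<^esub> zs ! k) {..<fst nL} = \<zero>\<^bsub>M\<^esub>)}"

lemma Lin:
  assumes i: "i \<in> I" and vs: "distinct vs" "set vs \<subseteq> J" "j0 \<notin> set vs"
    and cover: "supp R J c i - Domain G \<subseteq> insert j0 (set vs)"
    and zc: "\<And>j. j \<in> J \<Longrightarrow> z j \<in> carrier M" and z0: "\<And>j. j \<in> Domain G \<Longrightarrow> z j = \<zero>\<^bsub>M\<^esub>"
  shows "finsum M (\<lambda>j. c i j \<odot>\<^bsub>M\<^esub> z j) (supp R J c i)
       = c i j0 \<odot>\<^bsub>M\<^esub> z j0 \<oplus>\<^bsub>M\<^esub> finsum M (\<lambda>k. c i (vs ! k) \<odot>\<^bsub>M\<^esub> z (vs ! k)) {..<length vs}"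
proof -
  let ?f = "\<lambda>j. c i j \<odot>\<^bsub>M\<^esub> z j"
  let ?U = "insert j0 (set vs)"
  have UJ: "?U \<subseteq> J" using vs j0J by auto
  have fc: "\<And>j. j \<in> J \<Longrightarrow> ?f j \<in> carrier M" using cRJ[OF i] zc by (auto intro!: lsmult_closed)
  have "finsum M ?f (supp R J c i) = finsum M ?f ?U"
  proof (rule M.add.finprod_mono_neutral_cong)
    show "finite ?U" by simp
    show "finite (supp R J c i)" by (rule finS[OF i])
    show "\<And>j. j \<in> ?U - supp R J c i \<Longrightarrow> ?f j = \<zero>\<^bsub>M\<^esub>"
      using UJ zc by (auto simp: lsm_zero_l)
    show "?f j = \<zero>\<^bsub>M\<^esub>" if j: "j \<in> supp R J c i - ?U" for j
    proof -
      have "j \<in> Domain G" using cover j by blast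
      then show ?thesis using z0 cRJ[OF i] j by (simp add: lsm_zero_r)
    qed
    show "?f \<in> supp R J c i \<rightarrow> carrier M" using fc by auto
    show "?f \<in> ?U \<rightarrow> carrier M" using fc UJ by auto
  qed simp
  also have "\<dots> = ?f j0 \<oplus>\<^bsub>M\<^esub> finsum M ?f (set vs)"
    using vs fc UJ by (intro M.add.finprod_insert) auto
  also have "finsum M ?f (set vs) = finsum M ?f (nth vs ` {..<length vs})"
  proof -
    have "set vs = nth vs ` {..<length vs}" by (auto simp: set_conv_nth)
    then show ?thesis by simp
  qed
  also have "\<dots> = finsum M (\<lambda>k. ?f (vs ! k)) {..<length vs}"
  proof (rule M.add.finprod_reindex)
    show "?f \<in> nth vs ` {..<length vs} \<rightarrow> carrier M" using fc vs(2) nth_mem by blast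
    show "inj_on (nth vs) {..<length vs}" using vs(1) by (intro inj_on_nth) auto
  qed
  finally show ?thesis .
qed

end

context red begin
lemma H_eq_Phi:
  assumes I0: "I0 \<subseteq> I" "finite I0"
  shows "\<exists>nL \<in> UNIV \<times> lists (carrier R \<times> lists (carrier R)). H I0 = Phi nL"
proof -
  define V0 where "V0 = (\<Union>i\<in>I0. supp R J c i) - Domain G - {j0}"
  have "finite V0" unfolding V0_def using I0 finS by auto
  then obtain vs where vs: "set vs = V0" "distinct vs" using finite_distinct_list by blast
  obtain il where il: "set il = I0" using I0(2) finite_list by blast
  define n where "n = length vs"
  define L where "L = map (\<lambda>i. (c i j0, map (c i) vs)) il"
  have vsJ: "set vs \<subseteq> J" and j0vs: "j0 \<notin> set vs" using vs unfolding V0_def by auto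
  have cover: "supp R J c i - Domain G \<subseteq> insert j0 (set vs)" if "i \<in> I0" for i
    using that vs unfolding V0_def by auto
  have "set L \<subseteq> carrier R \<times> lists (carrier R)"
  proof
    fix p assume "p \<in> set L"
    then obtain i where i: "i \<in> I0" "p = (c i j0, map (c i) vs)" unfolding L_def using il by auto
    have iI: "i \<in> I" using i I0 by blast
    have "c i j0 \<in> carrier R" using cRJ[OF iI j0J] .
    moreover have "set (map (c i) vs) \<subseteq> carrier R" using cRJ[OF iI] vsJ by auto
    ultimately show "p \<in> carrier R \<times> lists (carrier R)" using i(2) by auto
  qed
  then have inL: "(n, L) \<in> UNIV \<times> lists (carrier R \<times> lists (carrier R))" by auto
  have "H I0 = Phi (n, L)"
  proof
    show "H I0 \<subseteq> Phi (n, L)"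
    proof
      fix g assume g: "g \<in> H I0"
      then obtain z where z: "solves R M J c (\<lambda>_. \<zero>\<^bsub>M\<^esub>) I0 z" "\<forall>j\<in>Domain G. z j = \<zero>\<^bsub>M\<^esub>" "z j0 = g"
        unfolding H_def by blast
      have zc: "\<And>j. j \<in> J \<Longrightarrow> z j \<in> carrier M" using z(1) by (simp add: solves_def)
      show "g \<in> Phi (n, L)"
        unfolding Phi_def
      proof (intro CollectI conjI exI[of _ "map z vs"])
        show "g \<in> carrier M" using H_car g by blast
        show "length (map z vs) = fst (n, L)" by (simp add: n_def)
        show "set (map z vs) \<subseteq> carrier M" using zc vsJ by auto
        show "\<forall>(a, bs)\<in>set (snd (n, L)). length bs = fst (n, L) \<and>
            a \<odot>\<^bsub>M\<^esub> g \<oplus>\<^bsub>M\<^esub> finsum M (\<lambda>k. bs ! k \<odot>\<^bsub>M\<^esub> map z vs ! k) {..<fst (n, L)} = \<zero>\<^bsub>M\<^esub>"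
        proof (clarify)
          fix a bs assume "(a, bs) \<in> set (snd (n, L))"
          then obtain i where i: "i \<in> I0" "a = c i j0" "bs = map (c i) vs" using il unfolding L_def by auto
          have iI: "i \<in> I" using i I0 by auto
          have "finsum M (\<lambda>k. bs ! k \<odot>\<^bsub>M\<^esub> map z vs ! k) {..<n} = finsum M (\<lambda>k. c i (vs ! k) \<odot>\<^bsub>M\<^esub> z (vs ! k)) {..<length vs}"
            using i(3) unfolding n_def by (intro M.add.finprod_cong') (auto intro!: lsmult_closed cRJ[OF iI] zc simp: Pi_def subsetD[OF vsJ])
          also have "c i j0 \<odot>\<^bsub>M\<^esub> z j0 \<oplus>\<^bsub>M\<^esub> \<dots> = finsum M (\<lambda>j. c i j \<odot>\<^bsub>M\<^esub> z j) (supp R J c i)"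
            using Lin[OF iI vs(2) vsJ j0vs cover[OF i(1)] zc] z(2) by simp
          also have "\<dots> = \<zero>\<^bsub>M\<^esub>" using z(1) i(1) by (simp add: solves_def)
          finally show "length bs = fst (n, L) \<and> a \<odot>\<^bsub>M\<^esub> g \<oplus>\<^bsub>M\<^esub> finsum M (\<lambda>k. bs ! k \<odot>\<^bsub>M\<^esub> map z vs ! k) {..<fst (n, L)} = \<zero>\<^bsub>M\<^esub>"
            using i z(3) by (simp add: n_def)
        qed
      qed
    qed
  next
    show "Phi (n, L) \<subseteq> H I0"
    proof
      fix g assume "g \<in> Phi (n, L)"
      then obtain zs where g: "g \<in> carrier M" and zs: "length zs = n" "set zs \<subseteq> carrier M"
        and rows: "\<forall>(a, bs)\<in>set L. length bs = n \<and> a \<odot>\<^bsub>M\<^esub> g \<oplus>\<^bsub>M\<^esub> finsum M (\<lambda>k. bs ! k \<odot>\<^bsub>M\<^esub> zs ! k) {..<n} = \<zero>\<^bsub>M\<^esub>"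
        unfolding Phi_def by auto
      define z where "z j = (if j = j0 then g else if j \<in> set vs then zs ! (THE k. k < n \<and> vs ! k = j) else \<zero>\<^bsub>M\<^esub>)" for j
      have zvs: "z (vs ! k) = zs ! k" if k: "k < n" for k
      proof -
        have "vs ! k \<noteq> j0" using j0vs k unfolding n_def by auto
        moreover have "vs ! k \<in> set vs" using k unfolding n_def by auto
        moreover have "(THE k'. k' < n \<and> vs ! k' = vs ! k) = k"
          by (rule the_equality) (use k vs(2) in \<open>auto simp: n_def nth_eq_iff_index_eq\<close>)
        ultimately show ?thesis unfolding z_def by simp
      qed
      have zc: "z j \<in> carrier M" for j
      proof -
        have "zs ! (THE k. k < n \<and> vs ! k = j) \<in> carrier M" if jv: "j \<in> set vs"
        proof -
          obtain k where k: "k < n" "vs ! k = j" using jv unfolding n_def by (auto simp: in_set_conv_nth)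
          have "(THE k'. k' < n \<and> vs ! k' = j) = k" unfolding k(2)[symmetric]
            by (rule the_equality) (use k(1) vs(2) in \<open>auto simp: n_def nth_eq_iff_index_eq\<close>)
          then show ?thesis using zs k(1) nth_mem by fastforce
        qed
        then show ?thesis unfolding z_def using g by auto
      qed
      have z0: "z j = \<zero>\<^bsub>M\<^esub>" if "j \<in> Domain G" for j
        using that j0G vs unfolding z_def V0_def by auto
      have "solves R M J c (\<lambda>_. \<zero>\<^bsub>M\<^esub>) I0 z"
        unfolding solves_def
      proof (intro conjI ballI)
        fix j show "z j \<in> carrier M" by (rule zc)
      next
        fix i assume i: "i \<in> I0"
        have iI: "i \<in> I" using i I0 by auto
        have row: "c i j0 \<odot>\<^bsub>M\<^esub> g \<oplus>\<^bsub>M\<^esub> finsum M (\<lambda>k. map (c i) vs ! k \<odot>\<^bsub>M\<^esub> zs ! k) {..<n} = \<zero>\<^bsub>M\<^esub>"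
        proof -
          have r: "(c i j0, map (c i) vs) \<in> set L" using i il unfolding L_def by auto
          show ?thesis using bspec[OF rows r] by simp
        qed
        have "finsum M (\<lambda>j. c i j \<odot>\<^bsub>M\<^esub> z j) (supp R J c i)
            = c i j0 \<odot>\<^bsub>M\<^esub> z j0 \<oplus>\<^bsub>M\<^esub> finsum M (\<lambda>k. c i (vs ! k) \<odot>\<^bsub>M\<^esub> z (vs ! k)) {..<length vs}"
          using Lin[OF iI vs(2) vsJ j0vs cover[OF i] zc] z0 by simp
        also have "finsum M (\<lambda>k. c i (vs ! k) \<odot>\<^bsub>M\<^esub> z (vs ! k)) {..<length vs}
            = finsum M (\<lambda>k. map (c i) vs ! k \<odot>\<^bsub>M\<^esub> zs ! k) {..<n}"
          unfolding n_def[symmetric] using zvs zs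
          by (intro M.add.finprod_cong') (auto intro!: lsmult_closed cRJ[OF iI] simp: Pi_def subsetD[OF vsJ] n_def)
        also have "z j0 = g" unfolding z_def by simp
        finally show "finsum M (\<lambda>j. c i j \<odot>\<^bsub>M\<^esub> z j) (supp R J c i) = \<zero>\<^bsub>M\<^esub>" using row by simp
      qed
      moreover have "z j0 = g" unfolding z_def by simp
      ultimately show "g \<in> H I0" unfolding H_def using z0 by blast
    qed
  qed
  then show ?thesis using inL by blast
qed

lemma H_countable:
  assumes cR: "countable (carrier R)"
  shows "countable (H ` {I0. I0 \<subseteq> I \<and> finite I0})"
proof -
  have "H ` {I0. I0 \<subseteq> I \<and> finite I0} \<subseteq> Phi ` (UNIV \<times> lists (carrier R \<times> lists (carrier R)))"
  proof
    fix X assume "X \<in> H ` {I0. I0 \<subseteq> I \<and> finite I0}"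
    then obtain I0 where I0: "I0 \<subseteq> I" "finite I0" "X = H I0" by blast
    obtain nL where "nL \<in> UNIV \<times> lists (carrier R \<times> lists (carrier R))" "H I0 = Phi nL"
      using H_eq_Phi[OF I0(1,2)] by blast
    then show "X \<in> Phi ` (UNIV \<times> lists (carrier R \<times> lists (carrier R)))" using I0(3) by blast
  qed
  moreover have "countable (carrier R \<times> lists (carrier R))"
    using cR by (intro countable_SIGMA countable_lists)
  then have "countable (lists (carrier R \<times> lists (carrier R)))" by (rule countable_lists)
  then have "countable (UNIV \<times> lists (carrier R \<times> lists (carrier R)) :: (nat \<times> ('r \<times> 'r list) list) set)"
    by (intro countable_SIGMA) auto
  ultimately show ?thesis by (meson countable_image countable_subset)
qed

end

context red begin

lemma extend:
  assumes cR: "countable (carrier R)"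
    and cc: "\<And>(I2 :: ('i + 'j) set) c2 m2. lin_system R M I2 J c2 m2 \<Longrightarrow> countable I2 \<Longrightarrow>
        (\<forall>I0\<subseteq>I2. finite I0 \<longrightarrow> (\<exists>x. solves R M J c2 m2 I0 x)) \<Longrightarrow> \<exists>x. solves R M J c2 m2 I2 x"
  shows "\<exists>q. \<forall>I0. I0 \<subseteq> I \<longrightarrow> finite I0 \<longrightarrow> q \<in> T I0"
proof -
  define \<FF> where "\<FF> = {I0. I0 \<subseteq> I \<and> finite I0}"
  define \<H> where "\<H> = H ` \<FF>"
  have cH: "countable \<H>" unfolding \<H>_def \<FF>_def using H_countable[OF cR] .
  define rp where "rp X = (SOME I0. I0 \<in> \<FF> \<and> H I0 = X)" for X
  have rp: "rp X \<in> \<FF> \<and> H (rp X) = X" if "X \<in> \<H>" for X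
  proof -
    have "\<exists>I0. I0 \<in> \<FF> \<and> H I0 = X" using that unfolding \<H>_def by blast
    then show ?thesis unfolding rp_def by (rule someI_ex)
  qed
  define I' where "I' = \<Union> (rp ` \<H>)"
  have I'I: "I' \<subseteq> I" unfolding I'_def using rp unfolding \<FF>_def by blast
  have cI': "countable I'" unfolding I'_def
    using cH rp unfolding \<FF>_def by (intro countable_UN) (auto intro: countable_finite)
  define gval where "gval j = (THE q. (j, q) \<in> G)" for j
  have gval: "(j, gval j) \<in> G" if jd: "j \<in> Domain G" for j
  proof -
    obtain q where q: "(j, q) \<in> G" using jd by blast
    have "gval j = q" unfolding gval_def by (rule the_equality) (use q Gfun in blast)+
    then show ?thesis using q by simp
  qed
  have gvalc: "gval j \<in> carrier M" if "j \<in> Domain G" for j using gval[OF that] GJ by blast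
  have DGJ: "Domain G \<subseteq> J" using GJ by blast
  define V' where "V' = (\<Union>i\<in>I'. supp R J c i)"
  define W where "W = Domain G \<inter> V'"
  have cW: "countable W"
  proof -
    have "countable V'" unfolding V'_def using cI' I'I finS
      by (intro countable_UN) (auto intro: countable_finite)
    then show ?thesis unfolding W_def by (rule countable_subset[rotated]) blast
  qed
  define I2 :: "('i + 'j) set" where "I2 = Inl ` I' \<union> Inr ` W"
  define c2 where "c2 a j = (case a of Inl i \<Rightarrow> c i j | Inr j' \<Rightarrow> (if j = j' then \<one>\<^bsub>R\<^esub> else \<zero>\<^bsub>R\<^esub>))" for a j
  define m2 where "m2 a = (case a of Inl i \<Rightarrow> m i | Inr j' \<Rightarrow> gval j')" for a
  have c2l: "c2 (Inl i) = c i" for i unfolding c2_def by auto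
  have suppl: "supp R J c2 (Inl i) = supp R J c i" for i unfolding c2_def by simp
  have inr_eq: "finsum M (\<lambda>j. c2 (Inr j') j \<odot>\<^bsub>M\<^esub> x j) (supp R J c2 (Inr j')) = x j'"
    if j': "j' \<in> J" and xc: "x j' \<in> carrier M" for j' x
  proof (cases "\<one>\<^bsub>R\<^esub> = \<zero>\<^bsub>R\<^esub>")
    case True
    have e: "supp R J c2 (Inr j') = {}" unfolding c2_def using True by auto
    show ?thesis unfolding e using one_zero_triv[OF True xc] by simp
  next
    case False
    have e: "supp R J c2 (Inr j') = {j'}" unfolding c2_def using False j' by auto
    have "finsum M (\<lambda>j. c2 (Inr j') j \<odot>\<^bsub>M\<^esub> x j) {j'} = c2 (Inr j') j' \<odot>\<^bsub>M\<^esub> x j' \<oplus>\<^bsub>M\<^esub> finsum M (\<lambda>j. c2 (Inr j') j \<odot>\<^bsub>M\<^esub> x j) {}"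
      by (rule M.add.finprod_insert) (use xc in \<open>auto simp: c2_def lsmult_one\<close>)
    then show ?thesis unfolding e using xc by (simp add: c2_def lsmult_one)
  qed
  have ls2: "lin_system R M I2 J c2 m2"
    unfolding lin_system_def
  proof
    fix a assume a: "a \<in> I2"
    show "(\<forall>j\<in>J. c2 a j \<in> carrier R) \<and> finite (supp R J c2 a) \<and> m2 a \<in> carrier M"
    proof (cases a)
      case (Inl i)
      then have "i \<in> I" using a I'I unfolding I2_def by auto
      then show ?thesis using Inl cRJ finS mM unfolding m2_def by (simp add: c2l suppl)
    next
      case (Inr j')
      then have j': "j' \<in> Domain G" using a unfolding I2_def W_def by auto
      have "supp R J c2 (Inr j') \<subseteq> {j'}" unfolding c2_def by auto
      then have "finite (supp R J c2 (Inr j'))" using finite_subset by blast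
      then show ?thesis using Inr gvalc[OF j'] unfolding m2_def c2_def by auto
    qed
  qed
  have fs2: "\<forall>I0\<subseteq>I2. finite I0 \<longrightarrow> (\<exists>x. solves R M J c2 m2 I0 x)"
  proof (intro allI impI)
    fix I0 assume I0: "I0 \<subseteq> I2" "finite I0"
    define Ia where "Ia = Inl -` I0"
    have IaI: "Ia \<subseteq> I" using I0 I'I unfolding Ia_def I2_def by auto
    have "finite Ia" unfolding Ia_def using I0(2) by (rule finite_vimageI) simp
    then obtain x where x: "solves R M J c m Ia x" "\<forall>(j, q)\<in>G. x j = q" using Gfs IaI by blast
    have xc: "\<And>j. j \<in> J \<Longrightarrow> x j \<in> carrier M" using x(1) by (simp add: solves_def)
    have "solves R M J c2 m2 I0 x"
      unfolding solves_def
    proof (intro conjI ballI)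
      fix j assume "j \<in> J" then show "x j \<in> carrier M" by (rule xc)
    next
      fix a assume a: "a \<in> I0"
      show "finsum M (\<lambda>j. c2 a j \<odot>\<^bsub>M\<^esub> x j) (supp R J c2 a) = m2 a"
      proof (cases a)
        case (Inl i)
        then have "i \<in> Ia" using a unfolding Ia_def by auto
        then show ?thesis using x(1) Inl unfolding m2_def by (simp add: solves_def c2l suppl)
      next
        case (Inr j')
        then have j': "j' \<in> Domain G" using a I0 unfolding I2_def W_def by auto
        have "x j' = gval j'" using bspec[OF x(2) gval[OF j']] by simp
        moreover have j'J: "j' \<in> J" using DGJ j' by blast
        ultimately show ?thesis using Inr inr_eq[of j' x, OF j'J xc[OF j'J]] unfolding m2_def by simp
      qed
    qed
    then show "\<exists>x. solves R M J c2 m2 I0 x" by blast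
  qed
  have cI2: "countable I2" unfolding I2_def using cI' cW by simp
  obtain xs where xs: "solves R M J c2 m2 I2 xs" using cc[OF ls2 cI2 fs2] by blast
  have xsc: "\<And>j. j \<in> J \<Longrightarrow> xs j \<in> carrier M" using xs by (simp add: solves_def)
  define y where "y j = (if j \<in> Domain G then gval j else xs j)" for j
  have xsI': "solves R M J c m I' xs"
    unfolding solves_def
  proof (intro conjI ballI)
    fix j assume "j \<in> J" then show "xs j \<in> carrier M" by (rule xsc)
  next
    fix i assume i: "i \<in> I'"
    have a: "Inl i \<in> I2" using i unfolding I2_def by auto
    show "finsum M (\<lambda>j. c i j \<odot>\<^bsub>M\<^esub> xs j) (supp R J c i) = m i"
    proof -
      have "finsum M (\<lambda>j. c2 (Inl i) j \<odot>\<^bsub>M\<^esub> xs j) (supp R J c2 (Inl i)) = m2 (Inl i)"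
        using xs a unfolding solves_def by blast
      then show ?thesis unfolding m2_def c2l suppl by simp
    qed
  qed
  have yI': "solves R M J c m I' y"
  proof (rule solves_local[OF _ ls I'I xsI'])
    show "left_module R M" by unfold_locales
    show "\<forall>j\<in>J. y j \<in> carrier M" unfolding y_def using gvalc xsc by auto
  next
    fix i j assume i: "i \<in> I'" and j: "j \<in> J" and cij: "c i j \<noteq> \<zero>\<^bsub>R\<^esub>"
    show "y j = xs j"
    proof (cases "j \<in> Domain G")
      case True
      then have "j \<in> W" unfolding W_def V'_def using i j cij by auto
      then have "Inr j \<in> I2" unfolding I2_def by auto
      then have "finsum M (\<lambda>j'. c2 (Inr j) j' \<odot>\<^bsub>M\<^esub> xs j') (supp R J c2 (Inr j)) = m2 (Inr j)"
        using xs by (simp add: solves_def)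
      then have "xs j = gval j" using inr_eq[of j xs, OF j xsc[OF j]] unfolding m2_def by simp
      then show ?thesis unfolding y_def using True by simp
    next
      case False then show ?thesis unfolding y_def by simp
    qed
  qed
  have yG: "\<forall>(j, q)\<in>G. y j = q"
  proof (intro ballI, clarify)
    fix j q assume jq: "(j, q) \<in> G"
    then have "j \<in> Domain G" by blast
    then have "(j, gval j) \<in> G" by (rule gval)
    then have "gval j = q" using Gfun jq by blast
    then show "y j = q" unfolding y_def using jq by auto
  qed
  define q where "q = y j0"
  have qT': "q \<in> T I0" if "I0 \<subseteq> I'" for I0
    unfolding T_def q_def using yI' yG that unfolding solves_def by blast
  show ?thesis
  proof (intro exI allI impI)
    fix I1 assume I1: "I1 \<subseteq> I" "finite I1"
    have X: "H I1 \<in> \<H>" unfolding \<H>_def \<FF>_def using I1 by blast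
    define I0 where "I0 = rp (H I1)"
    have I0F: "I0 \<subseteq> I" "finite I0" and HI0: "H I0 = H I1" using rp[OF X] unfolding I0_def \<FF>_def by auto
    have I0I': "I0 \<subseteq> I'" unfolding I0_def I'_def using X by blast
    have qI0: "q \<in> T I0" using qT'[OF I0I'] .
    obtain s where s: "s \<in> T (I0 \<union> I1)" using T_ne[of "I0 \<union> I1"] I0F I1 by auto
    have s0: "s \<in> T I0" and s1: "s \<in> T I1" using s T_mono[of I0 "I0 \<union> I1"] T_mono[of I1 "I0 \<union> I1"] by auto
    have d: "q \<oplus>\<^bsub>M\<^esub> \<ominus>\<^bsub>M\<^esub> s \<in> H I1" using T_diff[OF qI0 s0 I0F(1)] HI0 by simp
    have "s \<oplus>\<^bsub>M\<^esub> (q \<oplus>\<^bsub>M\<^esub> \<ominus>\<^bsub>M\<^esub> s) \<in> T I1" by (rule T_add[OF s1 d I1(1)])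
    moreover have "s \<oplus>\<^bsub>M\<^esub> (q \<oplus>\<^bsub>M\<^esub> \<ominus>\<^bsub>M\<^esub> s) = q"
    proof -
      have qc: "q \<in> carrier M" and sc: "s \<in> carrier M" using T_car qI0 s0 by auto
      have "s \<oplus>\<^bsub>M\<^esub> (q \<oplus>\<^bsub>M\<^esub> \<ominus>\<^bsub>M\<^esub> s) = q \<oplus>\<^bsub>M\<^esub> (s \<oplus>\<^bsub>M\<^esub> \<ominus>\<^bsub>M\<^esub> s)" using qc sc by (simp add: M.a_lcomm)
      also have "\<dots> = q" using qc sc by (simp add: M.r_neg)
      finally show ?thesis .
    qed
    ultimately show "q \<in> T I1" by simp
  qed
qed

end

lemma reduce:
  fixes R :: "'r ring" and M :: "('r, 'q) module" and I :: "'i set" and J :: "'j set"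
    and c :: "'i \<Rightarrow> 'j \<Rightarrow> 'r" and m :: "'i \<Rightarrow> 'q"
  assumes lm: "left_module R M" and cR: "countable (carrier R)"
    and cc: "\<And>(I2 :: ('i + 'j) set) c2 m2. lin_system R M I2 J c2 m2 \<Longrightarrow> countable I2 \<Longrightarrow>
        (\<forall>I0\<subseteq>I2. finite I0 \<longrightarrow> (\<exists>x. solves R M J c2 m2 I0 x)) \<Longrightarrow> \<exists>x. solves R M J c2 m2 I2 x"
    and ls: "lin_system R M I J c m"
    and fs: "\<forall>I0\<subseteq>I. finite I0 \<longrightarrow> (\<exists>x. solves R M J c m I0 x)"
  shows "\<exists>x. solves R M J c m I x"
proof -
  interpret LM: left_module R M by (rule lm)
  define \<A> where "\<A> = {G :: ('j \<times> 'q) set. G \<subseteq> J \<times> carrier M \<and>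
      (\<forall>j q q'. (j, q) \<in> G \<longrightarrow> (j, q') \<in> G \<longrightarrow> q = q') \<and>
      (\<forall>I0. I0 \<subseteq> I \<longrightarrow> finite I0 \<longrightarrow> (\<exists>x. solves R M J c m I0 x \<and> (\<forall>(j, q)\<in>G. x j = q)))}"
  have emptyA: "{} \<in> \<A>" unfolding \<A>_def using fs by auto
  have "\<forall>C\<in>chains \<A>. \<Union>C \<in> \<A>"
  proof
    fix C assume C: "C \<in> chains \<A>"
    have CA: "C \<subseteq> \<A>" using C by (rule chainsD2)
    have sub: "\<Union>C \<subseteq> J \<times> carrier M" using CA unfolding \<A>_def by blast
    have sfun: "\<forall>j q q'. (j, q) \<in> \<Union>C \<longrightarrow> (j, q') \<in> \<Union>C \<longrightarrow> q = q'"
    proof (intro allI impI)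
      fix j q q' assume "(j, q) \<in> \<Union>C" "(j, q') \<in> \<Union>C"
      then obtain G1 G2 where G: "G1 \<in> C" "G2 \<in> C" "(j, q) \<in> G1" "(j, q') \<in> G2" by blast
      have f1: "\<forall>j q q'. (j, q) \<in> G1 \<longrightarrow> (j, q') \<in> G1 \<longrightarrow> q = q'" using G(1) CA unfolding \<A>_def by blast
      have f2: "\<forall>j q q'. (j, q) \<in> G2 \<longrightarrow> (j, q') \<in> G2 \<longrightarrow> q = q'" using G(2) CA unfolding \<A>_def by blast
      have "G1 \<subseteq> G2 \<or> G2 \<subseteq> G1" using chainsD[OF C G(1,2)] .
      then show "q = q'"
      proof
        assume "G1 \<subseteq> G2" then show ?thesis using f2 G(3,4) by blast
      next
        assume "G2 \<subseteq> G1" then show ?thesis using f1 G(3,4) by blast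
      qed
    qed
    have fs': "\<forall>I0. I0 \<subseteq> I \<longrightarrow> finite I0 \<longrightarrow> (\<exists>x. solves R M J c m I0 x \<and> (\<forall>(j, q)\<in>\<Union>C. x j = q))"
    proof (intro allI impI)
      fix I0 assume I0: "I0 \<subseteq> I" "finite I0"
      define V0 where "V0 = (\<Union>i\<in>I0. supp R J c i)"
      have finV0: "finite V0" using I0 ls unfolding V0_def lin_system_def by auto
      define F where "F = \<Union>C \<inter> (V0 \<times> UNIV)"
      have finF: "finite F"
      proof -
        have "inj_on fst F"
        proof (rule inj_onI)
          fix p p' assume pp: "p \<in> F" "p' \<in> F" "fst p = fst p'"
          obtain j a where p: "p = (j, a)" by (cases p)
          obtain j' b where p': "p' = (j', b)" by (cases p')
          have "j = j'" using pp(3) p p' by simp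
          moreover have "(j, a) \<in> \<Union>C" "(j', b) \<in> \<Union>C" using pp p p' unfolding F_def by auto
          ultimately have "a = b" using sfun by blast
          then show "p = p'" using p p' \<open>j = j'\<close> by simp
        qed
        moreover have "fst ` F \<subseteq> V0" unfolding F_def by auto
        then have "finite (fst ` F)" using finV0 finite_subset by blast
        ultimately show ?thesis using finite_imageD by blast
      qed
      obtain G where G: "G \<in> \<A>" "F \<subseteq> G"
      proof (cases "C = {}")
        case True
        then have "F = {}" unfolding F_def by simp
        then show ?thesis using that emptyA by blast
      next
        case False
        have "subset.chain \<A> C" using C by (simp add: chains_alt_def)
        moreover have "F \<subseteq> \<Union>C" unfolding F_def by blast
        ultimately obtain B where "B \<in> C" "F \<subseteq> B" using finite_subset_Union_chain[OF finF _ False] by blast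
        then show ?thesis using that CA by blast
      qed
      obtain x where x: "solves R M J c m I0 x" "\<forall>(j, q)\<in>G. x j = q" using G(1) I0 unfolding \<A>_def by blast
      define gv where "gv j = (THE q. (j, q) \<in> \<Union>C)" for j
      have gv: "(j, gv j) \<in> \<Union>C" if jd: "j \<in> Domain (\<Union>C)" for j
      proof -
        obtain q where q: "(j, q) \<in> \<Union>C" using jd by blast
        have "gv j = q" unfolding gv_def by (rule the_equality) (use q sfun in blast)+
        then show ?thesis using q by simp
      qed
      define y where "y j = (if j \<in> Domain (\<Union>C) then gv j else x j)" for j
      have "solves R M J c m I0 y"
      proof (rule solves_local[OF lm ls I0(1) x(1)])
        show "\<forall>j\<in>J. y j \<in> carrier M" unfolding y_def using gv sub x(1) by (auto simp: solves_def)
      next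
        fix i j assume i: "i \<in> I0" and j: "j \<in> J" and cij: "c i j \<noteq> \<zero>\<^bsub>R\<^esub>"
        show "y j = x j"
        proof (cases "j \<in> Domain (\<Union>C)")
          case True
          have "j \<in> V0" unfolding V0_def using i j cij by auto
          then have "(j, gv j) \<in> G" using gv[OF True] G(2) unfolding F_def by blast
          then have "x j = gv j" using bspec[OF x(2)] by fastforce
          then show ?thesis unfolding y_def using True by simp
        next
          case False then show ?thesis unfolding y_def by simp
        qed
      qed
      moreover have "\<forall>(j, q)\<in>\<Union>C. y j = q"
      proof (intro ballI, clarify)
        fix j q G1 assume jq: "(j, q) \<in> G1" "G1 \<in> C"
        then have jd: "j \<in> Domain (\<Union>C)" by blast
        have "gv j = q" using gv[OF jd] jq sfun by blast
        then show "y j = q" unfolding y_def using jd by simp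
      qed
      ultimately show "\<exists>x. solves R M J c m I0 x \<and> (\<forall>(j, q)\<in>\<Union>C. x j = q)" by blast
    qed
    show "\<Union>C \<in> \<A>" unfolding \<A>_def using sub sfun fs' by blast
  qed
  then obtain G where G: "G \<in> \<A>" and max: "\<forall>X\<in>\<A>. G \<subseteq> X \<longrightarrow> X = G" using Zorn_Lemma by blast
  have GJ: "G \<subseteq> J \<times> carrier M" and Gfun: "\<And>j q q'. (j, q) \<in> G \<Longrightarrow> (j, q') \<in> G \<Longrightarrow> q = q'"
    and Gfs: "\<And>I0. I0 \<subseteq> I \<Longrightarrow> finite I0 \<Longrightarrow> \<exists>x. solves R M J c m I0 x \<and> (\<forall>(j, q)\<in>G. x j = q)"
    using G unfolding \<A>_def by blast+
  have dom: "J \<subseteq> Domain G"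
  proof (rule ccontr)
    assume "\<not> J \<subseteq> Domain G"
    then obtain j0 where j0: "j0 \<in> J" "j0 \<notin> Domain G" by blast
    have rd: "red R M I J c m G j0"
      by (intro red.intro[OF lm] red_axioms.intro ls GJ Gfun Gfs j0) (auto simp: Gfun)
    interpret RD: red R M I J c m G j0 by (rule rd)
    obtain q where q: "\<forall>I0. I0 \<subseteq> I \<longrightarrow> finite I0 \<longrightarrow> q \<in> RD.T I0" using RD.extend[OF cR cc] by blast
    have qc: "q \<in> carrier M" using q RD.T_car by blast
    define G' where "G' = insert (j0, q) G"
    have "G' \<in> \<A>"
      unfolding \<A>_def
    proof (intro CollectI conjI allI impI)
      show "G' \<subseteq> J \<times> carrier M" unfolding G'_def using GJ j0 qc by auto
    next
      fix j a b assume "(j, a) \<in> G'" "(j, b) \<in> G'"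
      then show "a = b" unfolding G'_def using Gfun j0(2) by blast
    next
      fix I0 assume I0: "I0 \<subseteq> I" "finite I0"
      then have "q \<in> RD.T I0" using q by blast
      then obtain x where x: "solves R M J c m I0 x" "\<forall>(j, q)\<in>G. x j = q" "x j0 = q"
        unfolding RD.T_def by blast
      have "\<forall>(j, q)\<in>G'. x j = q" unfolding G'_def using x(2,3) by auto
      then show "\<exists>x. solves R M J c m I0 x \<and> (\<forall>(j, q)\<in>G'. x j = q)" using x(1) by blast
    qed
    moreover have "G \<subseteq> G'" unfolding G'_def by blast
    ultimately have "G' = G" using max by blast
    then show False using j0(2) unfolding G'_def by blast
  qed
  define gv where "gv j = (THE q. (j, q) \<in> G)" for j
  have gv: "(j, gv j) \<in> G" if jd: "j \<in> Domain G" for j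
  proof -
    obtain q where q: "(j, q) \<in> G" using jd by blast
    have "gv j = q" unfolding gv_def by (rule the_equality) (use q Gfun in blast)+
    then show ?thesis using q by simp
  qed
  have gvc: "\<forall>j\<in>J. gv j \<in> carrier M" using gv dom GJ by blast
  have "solves R M J c m I gv"
    unfolding solves_def
  proof (intro conjI ballI)
    fix j assume "j \<in> J" then show "gv j \<in> carrier M" using gvc by blast
  next
    fix i assume i: "i \<in> I"
    obtain x where x: "solves R M J c m {i} x" "\<forall>(j, q)\<in>G. x j = q" using Gfs[of "{i}"] i by blast
    have "solves R M J c m {i} gv"
    proof (rule solves_local[OF lm ls _ x(1) gvc])
      show "{i} \<subseteq> I" using i by blast
    next
      fix i' j assume "i' \<in> {i}" "j \<in> J" "c i' j \<noteq> \<zero>\<^bsub>R\<^esub>"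
      then have "(j, gv j) \<in> G" using gv dom by blast
      then show "gv j = x j" using bspec[OF x(2)] by fastforce
    qed
    then show "finsum M (\<lambda>j. c i j \<odot>\<^bsub>M\<^esub> gv j) (supp R J c i) = m i" by (simp add: solves_def)
  qed
  then show ?thesis by blast
qed

theorem theorem4:
  fixes R :: "'r ring" and M :: "'a \<Rightarrow> ('r, 'b) module" and A B :: "'a set"
  assumes "ring R"
    and "countable (carrier R)"
    and "\<forall>\<alpha>\<in>A. left_module R (M \<alpha>)"
    and "B \<subseteq> A"
    and "countable B"
    and "\<forall>\<alpha>\<in>B. \<not> alg_compact_idx TYPE('k) TYPE('l) R (M \<alpha>)"
    and "\<forall>\<alpha>\<in>A - B. alg_compact_idx TYPE('r list \<times> 'b list) TYPE('r list \<times> 'b list) R (M \<alpha>)"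
  shows "alg_compact_idx TYPE('i) TYPE('j) R (quot_module (prod_module A M) (dsum_carrier A M))"
proof -
  interpret F: fam R A M using assms(1,3) by (intro fam.intro) auto
  have inf: "infinite (UNIV :: ('r list \<times> 'b list) set)"
    by (simp add: finite_prod infinite_UNIV_listI)
  show ?thesis
    unfolding alg_compact_idx_def
  proof (intro allI impI)
    fix I :: "'i set" and J :: "'j set" and c m
    assume ls: "lin_system R F.Q I J c m" and fs: "\<forall>I0\<subseteq>I. finite I0 \<longrightarrow> (\<exists>x. solves R F.Q J c m I0 x)"
    show "\<exists>x. solves R F.Q J c m I x"
    proof (rule reduce[OF F.Q_lm assms(2) _ ls fs])
      fix I2 :: "('i + 'j) set" and c2 m2
      assume "lin_system R F.Q I2 J c2 m2" "countable I2" "\<forall>I0\<subseteq>I2. finite I0 \<longrightarrow> (\<exists>x. solves R F.Q J c2 m2 I0 x)"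
      then show "\<exists>x. solves R F.Q J c2 m2 I2 x"
        using F.Q_countable_compact[OF assms(4,5,7) inf inf] by blast
    qed
  qed
qed


end
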